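(* Let $\alpha,\beta$ be positive integers and $q_0=(x_0,y_0,z_0)\in\mathbb{G}^3_{(\alpha,\beta)}$ a Riemannian point ($x_0\neq0$, $y_0\neq0$). Then $\tau_1(\lambda_0)\le\tau_2(\lambda_0)$ holds for all $\lambda_0=(u_0,v_0,w_0)\in H^{-1}_{q_0}(1/2)$ with $u_0=0$ (equivalently $\phi_1=\pi_\alpha/2$) if and only if $$|y_0|\ge\frac{\pi_\alpha|x_0|^{\alpha+1}}{\pi_\beta(\alpha+1)}.$$ Moreover, if $\{\lambda_0\in H^{-1}_{q_0}(1/2):u_0=0,\ \tau_2(\lambda_0)\le\tau_1(\lambda_0)\}\neq\emptyset$, then the curve $H^{-1}_{q_0}(1/2)\cap\{u_0=0\}$ consists of four arcs: two, centered around $\phi_2=0$ and $\phi_2=\pi_\beta$, on which $\tau_1\le\tau_2$, and two others on which $\tau_2\le\tau_1$.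
   Context: $\mathbb{G}^3_{(\alpha,\beta)}$ is $\mathbb{R}^3$ with coordinates $(x,y,z)$ and the sub-Riemannian structure generated by $\partial_x$, $x^\alpha\partial_y$, $x^\alpha y^\beta\partial_z$. Covectors $\lambda=(u,v,w)$, $H(q,\lambda)=\tfrac12(u^2+x^{2\alpha}v^2+x^{2\alpha}y^{2\beta}w^2)$, $H^{-1}_{q_0}(1/2)=\{\lambda_0:H(q_0,\lambda_0)=1/2\}$. $x(t)$ is the first coordinate of the projection of the solution of Hamilton's equations with initial data $(q_0,\lambda_0)$. For real $a\ge1$: $\pi_a=2\int_0^1(1-t^{2a})^{-1/2}dt$; $\sin_a$ is the inverse of $s\mapsto\int_0^s(1-t^{2a})^{-1/2}dt$ on $[0,\pi_a/2]$, extended by $\sin_a(s)=\sin_a(\pi_a-s)$ to $[0,\pi_a]$, oddly and $2\pi_a$-periodically; $\cos_a=\sin_a'$; $\rho_\theta(s)=|s|^{\theta-1}s$. Spherical coordinates $(\phi_1,\phi_2)\in[0,\pi_\alpha]\times[0,2\pi_\beta)$: $u_0=\cos_\alpha(\phi_1)$, $v_0=\cos_\beta(\phi_2)\rho_\alpha(\sin_\alpha(\phi_1)/x_0)$, $w_0=\rho_\alpha(\sin_\alpha(\phi_1)/x_0)\rho_\beta(\sin_\beta(\phi_2)/y_0)$. $\omega_1=(v_0^2+y_0^{2\beta}w_0^2)^{1/(2\alpha)}$, $\omega_2=|w_0|^{1/\beta}(v_0^2+y_0^{2\beta}w_0^2)^{(\beta-1)/(2\beta)}$, $\tau_1=\pi_\alpha/\omega_1$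 ($+\infty$ if $\omega_1=0$), $\tau_2=\min\{t>0:\omega_2\int_0^tx(s)^{2\alpha}ds=\pi_\beta\}$ ($+\infty$ if $w_0=0$). *)

theory Defs
  imports "HOL-Analysis.Analysis" "HOL-Library.Extended_Real"
begin

definition Fgen :: "real \<Rightarrow> real \<Rightarrow> real" where
  "Fgen a s = integral {0..s} (\<lambda>t. (1 - t powr (2 * a)) powr (-1/2))"

definition pi_gen :: "real \<Rightarrow> real" where
  "pi_gen a = 2 * Fgen a 1"

definition sin_base :: "real \<Rightarrow> real \<Rightarrow> real" where
  "sin_base a s = (THE y. y \<in> {0..1} \<and> Fgen a y = s)"

definition sin_half :: "real \<Rightarrow> real \<Rightarrow> real" where
  "sin_half a r = (if r \<le> pi_gen a / 2 then sin_base a r else sin_base a (pi_gen a - r))"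

text \<open>Odd and 2 pi_a-periodic extension.\<close>
definition sin_gen :: "real \<Rightarrow> real \<Rightarrow> real" where
  "sin_gen a s =
     (let r = s - 2 * pi_gen a * of_int \<lfloor>s / (2 * pi_gen a)\<rfloor>
      in if r \<le> pi_gen a then sin_half a r else - sin_half a (2 * pi_gen a - r))"

definition cos_gen :: "real \<Rightarrow> real \<Rightarrow> real" where
  "cos_gen a s = deriv (sin_gen a) s"

definition rho :: "real \<Rightarrow> real \<Rightarrow> real" where
  "rho \<theta> s = \<bar>s\<bar> powr (\<theta> - 1) * s"

definition Ham :: "nat \<Rightarrow> nat \<Rightarrow> real \<times> real \<times> real \<Rightarrow> real \<times> real \<times> real \<Rightarrow> real" where
  "Ham \<alpha> \<beta> q l = (case q of (x, y, z) \<Rightarrow> case l of (u, v, w) \<Rightarrow>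
     (u\<^sup>2 + x ^ (2 * \<alpha>) * v\<^sup>2 + x ^ (2 * \<alpha>) * y ^ (2 * \<beta>) * w\<^sup>2) / 2)"

definition ham_sol :: "nat \<Rightarrow> nat \<Rightarrow> real \<times> real \<times> real \<Rightarrow> real \<times> real \<times> real \<Rightarrow>
    (real \<Rightarrow> real) \<Rightarrow> (real \<Rightarrow> real) \<Rightarrow> (real \<Rightarrow> real) \<Rightarrow>
    (real \<Rightarrow> real) \<Rightarrow> (real \<Rightarrow> real) \<Rightarrow> (real \<Rightarrow> real) \<Rightarrow> bool" where
  "ham_sol \<alpha> \<beta> q0 l0 X Y Z U V W \<longleftrightarrow>
     (X 0, Y 0, Z 0) = q0 \<and> (U 0, V 0, W 0) = l0 \<and>
     (\<forall>t\<ge>0.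
        (X has_real_derivative U t) (at t within {0..}) \<and>
        (Y has_real_derivative X t ^ (2 * \<alpha>) * V t) (at t within {0..}) \<and>
        (Z has_real_derivative X t ^ (2 * \<alpha>) * Y t ^ (2 * \<beta>) * W t) (at t within {0..}) \<and>
        (U has_real_derivative
           - (real \<alpha> * X t ^ (2 * \<alpha> - 1) * ((V t)\<^sup>2 + Y t ^ (2 * \<beta>) * (W t)\<^sup>2)))
           (at t within {0..}) \<and>
        (V has_real_derivative
           - (real \<beta> * X t ^ (2 * \<alpha>) * Y t ^ (2 * \<beta> - 1) * (W t)\<^sup>2)) (at t within {0..}) \<and>
        (W has_real_derivative 0) (at t within {0..}))"

definition traj_x :: "nat \<Rightarrow> nat \<Rightarrow> real \<times> real \<times> real \<Rightarrow> real \<times> real \<times> real \<Rightarrow> real \<Rightarrow> real" where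
  "traj_x \<alpha> \<beta> q0 l0 t = (THE r. \<exists>X Y Z U V W. ham_sol \<alpha> \<beta> q0 l0 X Y Z U V W \<and> X t = r)"

definition omega1 :: "nat \<Rightarrow> nat \<Rightarrow> real \<times> real \<times> real \<Rightarrow> real \<times> real \<times> real \<Rightarrow> real" where
  "omega1 \<alpha> \<beta> q0 l0 = (case q0 of (x0, y0, z0) \<Rightarrow> case l0 of (u0, v0, w0) \<Rightarrow>
     (v0\<^sup>2 + y0 ^ (2 * \<beta>) * w0\<^sup>2) powr (1 / (2 * real \<alpha>)))"

definition omega2 :: "nat \<Rightarrow> nat \<Rightarrow> real \<times> real \<times> real \<Rightarrow> real \<times> real \<times> real \<Rightarrow> real" where
  "omega2 \<alpha> \<beta> q0 l0 = (case q0 of (x0, y0, z0) \<Rightarrow> case l0 of (u0, v0, w0) \<Rightarrow>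
     \<bar>w0\<bar> powr (1 / real \<beta>) *
     (v0\<^sup>2 + y0 ^ (2 * \<beta>) * w0\<^sup>2) powr ((real \<beta> - 1) / (2 * real \<beta>)))"

definition tau1 :: "nat \<Rightarrow> nat \<Rightarrow> real \<times> real \<times> real \<Rightarrow> real \<times> real \<times> real \<Rightarrow> ereal" where
  "tau1 \<alpha> \<beta> q0 l0 =
     (if omega1 \<alpha> \<beta> q0 l0 = 0 then \<infinity> else ereal (pi_gen (real \<alpha>) / omega1 \<alpha> \<beta> q0 l0))"

text \<open>The minimum is written as an infimum in ereal (which equals the min when attained,
  and is +\<infinity> when the set is empty).\<close>
definition tau2 :: "nat \<Rightarrow> nat \<Rightarrow> real \<times> real \<times> real \<Rightarrow> real \<times> real \<times> real \<Rightarrow> ereal" where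
  "tau2 \<alpha> \<beta> q0 l0 =
     (if snd (snd l0) = 0 then \<infinity>
      else Inf {ereal t | t. t > 0 \<and>
             omega2 \<alpha> \<beta> q0 l0 * integral {0..t} (\<lambda>s. traj_x \<alpha> \<beta> q0 l0 s ^ (2 * \<alpha>))
               = pi_gen (real \<beta>)})"

definition sph :: "nat \<Rightarrow> nat \<Rightarrow> real \<times> real \<times> real \<Rightarrow> real \<Rightarrow> real \<Rightarrow> real \<times> real \<times> real" where
  "sph \<alpha> \<beta> q0 \<phi>1 \<phi>2 = (case q0 of (x0, y0, z0) \<Rightarrow>
     (cos_gen (real \<alpha>) \<phi>1,
      cos_gen (real \<beta>) \<phi>2 * rho (real \<alpha>) (sin_gen (real \<alpha>) \<phi>1 / x0),
      rho (real \<alpha>) (sin_gen (real \<alpha>) \<phi>1 / x0) * rho (real \<beta>) (sin_gen (real \<beta>) \<phi>2 / y0)))"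

end

theory Submission
  imports Defs
begin

lemma powr_nat_nonneg: "0 \<le> (t::real) \<Longrightarrow> 0 < k \<Longrightarrow> t powr (real k) = t ^ k"
  by (cases "t = 0") (auto simp: powr_realpow)

definition gi :: "nat \<Rightarrow> real \<Rightarrow> real" where
  "gi n t = (1 - t powr (2 * real n)) powr (-1/2)"

lemma pow_lt1: "0 \<le> (t::real) \<Longrightarrow> t < 1 \<Longrightarrow> 0 < k \<Longrightarrow> t ^ k < 1"
  by (simp add: power_less_one_iff)

lemma powr_mhalf: "0 < (x::real) \<Longrightarrow> x powr (-1/2) = 1 / sqrt x"
proof -
  assume "0 < x"
  have "x powr (-1/2) = x powr (-(1/2))" by simp
  also have "\<dots> = 1 / x powr (1/2)" by (rule powr_minus_divide)
  also have "\<dots> = 1 / sqrt x" using \<open>0 < x\<close> by (simp add: powr_half_sqrt)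
  finally show ?thesis .
qed

lemma gi_eq:
  assumes "1 \<le> n" "0 \<le> t" "t < 1"
  shows "gi n t = 1 / sqrt (1 - t ^ (2*n))"
proof -
  have "t powr (2 * real n) = t ^ (2*n)"
    using powr_nat_nonneg[of t "2*n"] assms by simp
  moreover have "t ^ (2*n) < 1" using assms by (intro pow_lt1) auto
  moreover have "(1 - t^(2*n)) powr (-1/2) = 1 / sqrt (1 - t^(2*n))"
    by (rule powr_mhalf) (use calculation in simp)
  ultimately show ?thesis
    by (simp add: gi_def)
qed

lemma gi_pos: "1 \<le> n \<Longrightarrow> 0 \<le> t \<Longrightarrow> t < 1 \<Longrightarrow> gi n t > 0"
  using pow_lt1[of t "2*n"] by (simp add: gi_eq)

lemma gi_bound:
  assumes "1 \<le> n" "0 \<le> t" "t \<le> 1"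
  shows "\<bar>gi n t\<bar> \<le> (1 - t) powr (-1/2)"
proof (cases "t = 1")
  case True then show ?thesis by (simp add: gi_def)
next
  case False
  then have t1: "t < 1" using assms by simp
  have "t ^ (2*n) \<le> t" using assms
    using power_decreasing[of 1 "2*n" t] by simp
  hence le: "1 - t \<le> 1 - t^(2*n)" by simp
  have "0 < 1 - t" using t1 by simp
  have "gi n t = (1 - t^(2*n)) powr (-1/2)"
    using powr_nat_nonneg[of t "2*n"] assms by (simp add: gi_def)
  also have "\<dots> \<le> (1 - t) powr (-1/2)"
    by (rule powr_mono2') (use le \<open>0 < 1 - t\<close> in auto)
  finally show ?thesis using gi_pos[OF assms(1,2) t1] by simp
qed

lemma bound_integrable: "((\<lambda>t::real. (1 - t) powr (-1/2)) has_integral 2) {0..1}"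
proof -
  have "((\<lambda>t::real. (1 - t) powr (-1/2)) has_integral ((\<lambda>t. - 2 * sqrt (1 - t)) 1 - (\<lambda>t. - 2 * sqrt (1 - t)) 0)) {0..1}"
  proof (rule fundamental_theorem_of_calculus_interior)
    show "continuous_on {0..1} (\<lambda>t::real. - 2 * sqrt (1 - t))"
      by (intro continuous_intros)
    fix x :: real assume x: "x \<in> {0<..<1}"
    show "((\<lambda>t. - 2 * sqrt (1 - t)) has_vector_derivative (1 - x) powr (-1/2)) (at x)"
    proof -
      have "((\<lambda>t. - 2 * sqrt (1 - t)) has_real_derivative 1 / sqrt (1 - x)) (at x)"
        using x by (auto intro!: derivative_eq_intros simp: field_simps)
      moreover have "(1 - x) powr (-1/2) = 1 / sqrt (1 - x)" using x by (intro powr_mhalf) auto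
      ultimately show ?thesis by (simp add: has_real_derivative_iff_has_vector_derivative)
    qed
  qed simp
  then show ?thesis by simp
qed

lemma gi_integrable: "1 \<le> n \<Longrightarrow> gi n integrable_on {0..1}"
proof -
  assume n: "1 \<le> n"
  have neg: "negligible ({0..<1::real} - {0..1} \<union> ({0..1} - {0..<1}))"
    by (rule negligible_subset[of "{1}"]) auto
  have cont: "continuous_on {0..<1} (gi n)"
  proof -
    have "continuous_on {0..<1} (\<lambda>t. 1 / sqrt (1 - t ^ (2*n)))"
    proof -
      have aux: "t ^ (2*n) \<noteq> 1" if "0 \<le> t" "t < 1" for t :: real
        using pow_lt1[of t "2*n"] n that by auto
      show ?thesis by (intro continuous_intros) (auto dest: aux)
    qed
    then show ?thesis
      by (rule continuous_on_cong[THEN iffD1, rotated 2]) (auto simp: gi_eq[OF n])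
  qed
  have "gi n integrable_on {0..<1}"
  proof (rule measurable_bounded_by_integrable_imp_integrable_real)
    show "gi n \<in> borel_measurable (lebesgue_on {0..<1})"
      by (rule continuous_imp_measurable_on_sets_lebesgue[OF cont]) auto
    have "(\<lambda>t::real. (1 - t) powr (-1/2)) integrable_on {0..1}"
      using bound_integrable by blast
    then show "(\<lambda>t::real. (1 - t) powr (-1/2)) integrable_on {0..<1}"
      using integrable_spike_set_eq[OF neg] by blast
    show "\<bar>gi n x\<bar> \<le> (1 - x) powr (-1/2)" if "x \<in> {0..<1}" for x
      using gi_bound[OF n] that by auto
  qed auto
  then show ?thesis using integrable_spike_set_eq[OF neg] by blast
qed

locale gtrig =
  fixes n :: nat
  assumes n1: "1 \<le> n"
begin

abbreviation "F \<equiv> Fgen (real n)"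
abbreviation "P \<equiv> pi_gen (real n)"
abbreviation "SB \<equiv> sin_base (real n)"
abbreviation "SH \<equiv> sin_half (real n)"
abbreviation "S \<equiv> sin_gen (real n)"
abbreviation "C \<equiv> cos_gen (real n)"

lemma F_eq: "F y = integral {0..y} (gi n)"
  by (simp add: Fgen_def gi_def[abs_def])

lemma F_cont: "continuous_on {0..1} F"
  unfolding F_eq by (rule indefinite_integral_continuous_1[OF gi_integrable[OF n1]])

lemma gi_cont: "b < 1 \<Longrightarrow> continuous_on {0..b} (gi n)"
proof -
  assume b: "b < 1"
  have aux: "t ^ (2*n) \<noteq> 1" if "0 \<le> t" "t < 1" for t :: real
    using pow_lt1[of t "2*n"] n1 that by auto
  have "continuous_on {0..b} (\<lambda>t. 1 / sqrt (1 - t ^ (2*n)))"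
    using b by (intro continuous_intros) (auto dest!: aux)
  then show ?thesis
    by (rule continuous_on_cong[THEN iffD1, rotated 2]) (use b in \<open>auto simp: gi_eq[OF n1]\<close>)
qed

lemma F_deriv: "0 < y \<Longrightarrow> y < 1 \<Longrightarrow> (F has_real_derivative gi n y) (at y)"
proof -
  assume y: "0 < y" "y < 1"
  define b where "b = (1 + y) / 2"
  have b: "y < b" "b < 1" using y by (auto simp: b_def)
  have "((\<lambda>x. integral {0..x} (gi n)) has_real_derivative gi n y) (at y within {0..b})"
    by (rule integral_has_real_derivative[OF gi_cont[OF b(2)]]) (use y b in auto)
  moreover have "at y within {0..b} = at y" by (rule at_within_Icc_at) (use y b in auto)
  ultimately show ?thesis by (simp add: F_eq[abs_def])
qed

lemma F0: "F 0 = 0" by (simp add: F_eq)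

lemma F_strict: "0 \<le> y1 \<Longrightarrow> y1 < y2 \<Longrightarrow> y2 \<le> 1 \<Longrightarrow> F y1 < F y2"
proof -
  assume y: "0 \<le> y1" "y1 < y2" "y2 \<le> 1"
  show ?thesis
  proof (rule DERIV_pos_imp_increasing_open[OF y(2)])
    fix x assume "y1 < x" "x < y2"
    then show "\<exists>d. (F has_real_derivative d) (at x) \<and> 0 < d"
      using y F_deriv gi_pos[OF n1] by (metis less_eq_real_def less_le_trans order_le_less_trans)
  next
    show "continuous_on {y1..y2} F"
      using F_cont by (rule continuous_on_subset) (use y in auto)
  qed
qed

lemma F_mono: "0 \<le> y1 \<Longrightarrow> y1 \<le> y2 \<Longrightarrow> y2 \<le> 1 \<Longrightarrow> F y1 \<le> F y2"
  using F_strict by (cases "y1 = y2") (auto intro: less_imp_le)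

lemma P_eq: "P = 2 * F 1" by (simp add: pi_gen_def)

lemma P_pos: "0 < P"
  using F_strict[of 0 1] by (simp add: P_eq F0)

lemma F_inj: "0 \<le> y1 \<Longrightarrow> y1 \<le> 1 \<Longrightarrow> 0 \<le> y2 \<Longrightarrow> y2 \<le> 1 \<Longrightarrow> F y1 = F y2 \<Longrightarrow> y1 = y2"
  using F_strict by (metis less_irrefl linorder_neqE_linordered_idom)

lemma F_range: "0 \<le> y \<Longrightarrow> y \<le> 1 \<Longrightarrow> 0 \<le> F y \<and> F y \<le> P / 2"
  using F_mono[of 0 y] F_mono[of y 1] by (simp add: F0 P_eq)

lemma SB_prop: "0 \<le> s \<Longrightarrow> s \<le> P / 2 \<Longrightarrow> 0 \<le> SB s \<and> SB s \<le> 1 \<and> F (SB s) = s"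
proof -
  assume s: "0 \<le> s" "s \<le> P / 2"
  obtain y where y: "0 \<le> y" "y \<le> 1" "F y = s"
    using IVT'[of F 0 s 1] F_cont s by (auto simp: F0 P_eq)
  have "SB s = y"
    unfolding sin_base_def
  proof (rule the_equality)
    show "y \<in> {0..1} \<and> F y = s" using y by auto
    fix z assume "z \<in> {0..1} \<and> F z = s"
    then show "z = y" using F_inj y by auto
  qed
  then show ?thesis using y by simp
qed

lemma SB_F: "0 \<le> y \<Longrightarrow> y \<le> 1 \<Longrightarrow> SB (F y) = y"
  using SB_prop[of "F y"] F_range[of y] F_inj by auto

lemma SB0: "SB 0 = 0" using SB_F[of 0] by (simp add: F0)
lemma SB1: "SB (P/2) = 1" using SB_F[of 1] by (simp add: P_eq)

lemma SB_strict: "0 \<le> s1 \<Longrightarrow> s1 < s2 \<Longrightarrow> s2 \<le> P/2 \<Longrightarrow> SB s1 < SB s2"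
proof -
  assume s: "0 \<le> s1" "s1 < s2" "s2 \<le> P/2"
  have a: "0 \<le> SB s1 \<and> SB s1 \<le> 1 \<and> F (SB s1) = s1" by (rule SB_prop) (use s in auto)
  have b: "0 \<le> SB s2 \<and> SB s2 \<le> 1 \<and> F (SB s2) = s2" by (rule SB_prop) (use s in auto)
  show ?thesis
  proof (rule ccontr)
    assume "\<not> SB s1 < SB s2"
    then have "F (SB s2) \<le> F (SB s1)" using F_mono[of "SB s2" "SB s1"] a b by auto
    then show False using a b s by auto
  qed
qed

lemma F_image: "F ` {0..1} = {0..P/2}"
proof
  show "F ` {0..1} \<subseteq> {0..P/2}" using F_range by auto
  show "{0..P/2} \<subseteq> F ` {0..1}"
  proof
    fix s assume "s \<in> {0..P/2}"
    then have "0 \<le> SB s \<and> SB s \<le> 1 \<and> F (SB s) = s" using SB_prop by auto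
    then show "s \<in> F ` {0..1}" by (metis atLeastAtMost_iff image_eqI)
  qed
qed

lemma SB_cont: "continuous_on {0..P/2} SB"
proof -
  have "continuous_on (F ` {0..1}) SB"
    by (rule continuous_on_inv[OF F_cont]) (auto simp: SB_F)
  then show ?thesis by (simp add: F_image)
qed

lemma SB_deriv:
  assumes s: "0 < s" "s < P/2"
  shows "(SB has_real_derivative sqrt (1 - SB s ^ (2*n))) (at s)"
proof -
  have p: "0 \<le> SB s \<and> SB s \<le> 1 \<and> F (SB s) = s" using SB_prop s by auto
  have lt: "0 < SB s" "SB s < 1"
    using SB_strict[of 0 s] SB_strict[of s "P/2"] s by (auto simp: SB0 SB1)
  have "(SB has_real_derivative inverse (gi n (SB s))) (at s)"
  proof (rule DERIV_inverse_function[where a=0 and b="P/2"])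
    show "(F has_real_derivative gi n (SB s)) (at (SB s))" using F_deriv lt by auto
    show "gi n (SB s) \<noteq> 0" using gi_pos[OF n1, of "SB s"] lt by simp
    show "0 < s" "s < P/2" using s by auto
    show "F (SB y) = y" if "0 < y" "y < P/2" for y using SB_prop that by auto
    show "isCont SB s"
      using SB_cont s by (simp add: continuous_on_eq_continuous_at[symmetric] continuous_on_interior)
  qed
  moreover have "inverse (gi n (SB s)) = sqrt (1 - SB s ^ (2*n))"
    using lt by (simp add: gi_eq[OF n1] pow_lt1)
  ultimately show ?thesis by simp
qed

end

context gtrig
begin

lemma SH_range: "0 \<le> r \<Longrightarrow> r \<le> P \<Longrightarrow> 0 \<le> SH r \<and> SH r \<le> 1"
  unfolding sin_half_def using SB_prop[of r] SB_prop[of "P - r"] by auto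

lemma SH_sym: "0 \<le> r \<Longrightarrow> r \<le> P \<Longrightarrow> SH (P - r) = SH r"
  unfolding sin_half_def by auto

lemma SH0: "SH 0 = 0" using P_pos by (simp add: sin_half_def SB0)
lemma SHP: "SH P = 0" using P_pos by (simp add: sin_half_def SB0)

lemma S_repr:
  assumes "0 \<le> r" "r < 2 * P"
  shows "S (r + 2 * P * of_int k) = (if r \<le> P then SH r else - SH (2 * P - r))"
proof -
  have fl: "\<lfloor>(r + 2 * P * of_int k) / (2 * P)\<rfloor> = k"
  proof (rule floor_unique)
    have "(r + 2 * P * of_int k) / (2 * P) = r / (2*P) + of_int k"
      using P_pos by (simp add: field_simps)
    moreover have "0 \<le> r / (2*P)" "r / (2*P) < 1" using assms P_pos by auto
    ultimately show "of_int k \<le> (r + 2 * P * of_int k) / (2 * P)"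
      "(r + 2 * P * of_int k) / (2 * P) < of_int k + 1" by auto
  qed
  show ?thesis unfolding sin_gen_def Let_def fl by simp
qed

lemma S_repr0:
  assumes "0 \<le> r" "r < 2 * P"
  shows "S r = (if r \<le> P then SH r else - SH (2 * P - r))"
  using S_repr[OF assms, of 0] by simp

lemma decomp: obtains r k where "0 \<le> r" "r < 2 * P" "s = r + 2 * P * of_int k"
proof -
  define k where "k = \<lfloor>s / (2 * P)\<rfloor>"
  define r where "r = s - 2 * P * of_int k"
  have a: "of_int k \<le> s / (2*P)" "s / (2*P) < of_int k + 1" unfolding k_def
    using of_int_floor_le real_of_int_floor_add_one_gt by blast+
  have "2 * P * of_int k \<le> s" using a(1) P_pos by (simp add: field_simps)
  moreover have "s < 2 * P * of_int k + 2 * P" using a(2) P_pos by (simp add: field_simps)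
  ultimately have "0 \<le> r" "r < 2 * P" "s = r + 2 * P * of_int k" by (auto simp: r_def)
  then show ?thesis by (rule that)
qed

lemma S_period: "S (s + 2 * P * of_int k) = S s"
proof -
  obtain r j where r: "0 \<le> r" "r < 2 * P" "s = r + 2 * P * of_int j" by (rule decomp)
  have e: "s + 2 * P * of_int k = r + 2 * P * of_int (j + k)" using r by (simp add: algebra_simps)
  have "S (s + 2 * P * of_int k) = S (r + 2 * P * of_int (j + k))" by (simp only: e)
  also have "\<dots> = (if r \<le> P then SH r else - SH (2 * P - r))" by (rule S_repr[OF r(1,2)])
  also have "\<dots> = S (r + 2 * P * of_int j)" by (rule S_repr[OF r(1,2), symmetric])
  finally show ?thesis using r(3) by simp
qed

lemma S_period1: "S (s + 2 * P) = S s"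
  using S_period[of s 1] by simp

lemma S_odd: "S (- s) = - S s"
proof -
  obtain r k where r: "0 \<le> r" "r < 2 * P" "s = r + 2 * P * of_int k" by (rule decomp)
  show ?thesis
  proof (cases "r = 0")
    case True
    then have "-s = 0 + 2 * P * of_int (-k)" using r by simp
    then show ?thesis using S_repr[of 0 "-k"] S_repr[of 0 k] r True P_pos by (simp add: SH0)
  next
    case False
    then have r2: "0 \<le> 2*P - r" "2*P - r < 2*P" using r by auto
    have "-s = (2*P - r) + 2 * P * of_int (-k-1)" using r by (simp add: algebra_simps)
    then have e1: "S (-s) = (if 2*P - r \<le> P then SH (2*P - r) else - SH (2 * P - (2*P - r)))"
      using S_repr[OF r2, of "-k-1"] by simp
    have e2: "S s = (if r \<le> P then SH r else - SH (2 * P - r))" using S_repr[OF r(1,2)] r(3) by simp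
    show ?thesis
    proof (cases "r = P")
      case True then show ?thesis using e1 e2 by (simp add: SHP)
    next
      case False then show ?thesis using e1 e2 by auto
    qed
  qed
qed

lemma S_shiftP: "S (s + P) = - S s"
proof -
  obtain r k where r: "0 \<le> r" "r < 2 * P" "s = r + 2 * P * of_int k" by (rule decomp)
  have e2: "S s = (if r \<le> P then SH r else - SH (2 * P - r))" using S_repr[OF r(1,2)] r(3) by simp
  show ?thesis
  proof (cases "r < P")
    case True
    have r2: "0 \<le> r + P" "r + P < 2*P" using r True by auto
    have "S (s + P) = (if r + P \<le> P then SH (r + P) else - SH (2 * P - (r + P)))"
    proof -
      have e: "s + P = (r + P) + 2 * P * of_int k" using r(3) by simp
      show ?thesis unfolding e by (rule S_repr[OF r2])
    qed
    also have "\<dots> = - SH r"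
    proof (cases "r = 0")
      case True then show ?thesis by (simp add: SH0 SHP)
    next
      case False
      then have a: "2 * P - (r + P) = P - r" "\<not> r + P \<le> P" using r by auto
      have "SH (P - r) = SH r" using SH_sym[of r] r True by simp
      then show ?thesis by (simp only: a if_False)
    qed
    moreover have "S s = SH r" using e2 True by simp
    ultimately show ?thesis by simp
  next
    case False
    have r2: "0 \<le> r - P" "r - P < 2*P" using r False by auto
    have e: "s + P = (r - P) + 2 * P * of_int (k + 1)" using r by (simp add: algebra_simps)
    have "S (s + P) = (if r - P \<le> P then SH (r - P) else - SH (2 * P - (r - P)))"
      unfolding e by (rule S_repr[OF r2])
    also have "\<dots> = SH (r - P)" using r by simp
    finally have e1: "S (s + P) = SH (r - P)" .
    show ?thesis
    proof (cases "r = P")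
      case True then show ?thesis using e1 e2 by (simp add: SH0 SHP)
    next
      case False
      then have nr: "\<not> r \<le> P" using \<open>\<not> r < P\<close> by auto
      have "SH (P - (r - P)) = SH (r - P)" by (rule SH_sym) (use r \<open>\<not> r < P\<close> in auto)
      moreover have "P - (r - P) = 2 * P - r" by simp
      ultimately have q: "SH (2 * P - r) = SH (r - P)" by (simp only:)
      have e2': "S s = - SH (2 * P - r)" using e2 nr by (simp only: if_False)
      show ?thesis by (simp only: e1 e2' q minus_minus)
    qed
  qed
qed

lemma S_sym: "S (P - s) = S s"
proof -
  have "S s = S ((s - P) + P)" by simp
  also have "\<dots> = - S (s - P)" by (rule S_shiftP)
  also have "\<dots> = S (P - s)" using S_odd[of "s - P"] by simp
  finally show ?thesis by simp
qed

lemma S_eq_SB: "0 \<le> s \<Longrightarrow> s \<le> P/2 \<Longrightarrow> S s = SB s"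
  using S_repr0[of s] P_pos by (simp add: sin_half_def)

lemma S0: "S 0 = 0" using S_eq_SB[of 0] P_pos by (simp add: SB0)
lemma SP2: "S (P/2) = 1" using S_eq_SB[of "P/2"] P_pos by (simp add: SB1)

lemma sym_closure:
  assumes base: "\<And>s. 0 \<le> s \<Longrightarrow> s \<le> P/2 \<Longrightarrow> Q s"
    and symP: "\<And>s. Q s \<Longrightarrow> Q (P - s)"
    and neg: "\<And>s. Q s \<Longrightarrow> Q (- s)"
    and per: "\<And>s k. Q s \<Longrightarrow> Q (s + 2 * P * of_int k)"
  shows "Q s"
proof -
  have A: "Q s" if "0 \<le> s" "s \<le> P" for s
  proof (cases "s \<le> P/2")
    case True then show ?thesis using base that by auto
  next
    case False
    then have "Q (P - s)" using base that by auto
    then show ?thesis using symP[of "P - s"] by simp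
  qed
  have B: "Q s" if "-P \<le> s" "s \<le> P" for s
  proof (cases "0 \<le> s")
    case True then show ?thesis using A that by auto
  next
    case False
    then have "Q (-s)" using A that by auto
    then show ?thesis using neg[of "-s"] by simp
  qed
  obtain r k where r: "0 \<le> r" "r < 2 * P" "s = r + 2 * P * of_int k" by (rule decomp)
  show ?thesis
  proof (cases "r \<le> P")
    case True then show ?thesis using B[of r] per[of r k] r by auto
  next
    case False
    then have "Q (r - 2*P)" using B[of "r - 2*P"] r by auto
    then have "Q ((r - 2*P) + 2 * P * of_int (k + 1))" by (rule per)
    then show ?thesis using r by (simp add: algebra_simps)
  qed
qed

end

lemma deriv_limit:
  fixes f f' :: "real \<Rightarrow> real"
  assumes e: "0 < e" and cont: "continuous_on {x-e..x+e} f"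
    and der: "\<And>t. x - e < t \<Longrightarrow> t < x + e \<Longrightarrow> t \<noteq> x \<Longrightarrow> (f has_real_derivative f' t) (at t)"
    and lim: "(f' \<longlongrightarrow> L) (at x)"
  shows "(f has_real_derivative L) (at x)"
  unfolding has_field_derivative_iff LIM_eq
proof (intro allI impI)
  fix r :: real assume r: "0 < r"
  obtain s where s: "0 < s" "\<And>y. y \<noteq> x \<Longrightarrow> norm (y - x) < s \<Longrightarrow> norm (f' y - L) < r"
    using lim r unfolding LIM_eq by blast
  show "\<exists>s>0. \<forall>y. y \<noteq> x \<and> norm (y - x) < s \<longrightarrow> norm ((f y - f x) / (y - x) - L) < r"
  proof (intro exI[of _ "min s e"] conjI allI impI)
    show "0 < min s e" using s e by simp
    fix y assume y: "y \<noteq> x \<and> norm (y - x) < min s e"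
    have mvt: "\<exists>z. z \<noteq> x \<and> norm (z - x) < min s e \<and> (f y - f x) / (y - x) = f' z"
    proof (cases "x < y")
      case True
      have "\<exists>l z. x < z \<and> z < y \<and> DERIV f z :> l \<and> f y - f x = (y - x) * l"
      proof (rule MVT[OF True])
        show "continuous_on {x..y} f" using cont by (rule continuous_on_subset) (use y in auto)
        fix z
        assume "x < z" "z < y"
        moreover have "y < x + e" using y by auto
        ultimately have "(f has_real_derivative f' z) (at z)" using der[of z] e by auto
        then show "f differentiable (at z)" unfolding real_differentiable_def by blast
      qed
      then obtain l z where z: "x < z" "z < y" "DERIV f z :> l" "f y - f x = (y - x) * l" by blast
      have "DERIV f z :> f' z" using der[of z] z y by auto
      then have "l = f' z" using z(3) DERIV_unique by blast
      then show ?thesis using z y True by (intro exI[of _ z]) auto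
    next
      case False
      then have yx: "y < x" using y by auto
      have "\<exists>l z. y < z \<and> z < x \<and> DERIV f z :> l \<and> f x - f y = (x - y) * l"
      proof (rule MVT[OF yx])
        show "continuous_on {y..x} f" using cont by (rule continuous_on_subset) (use y in auto)
        fix z
        assume "y < z" "z < x"
        moreover have "x - e < y" using y by auto
        ultimately have "(f has_real_derivative f' z) (at z)" using der[of z] e by auto
        then show "f differentiable (at z)" unfolding real_differentiable_def by blast
      qed
      then obtain l z where z: "y < z" "z < x" "DERIV f z :> l" "f x - f y = (x - y) * l" by blast
      have "DERIV f z :> f' z" using der[of z] z y by auto
      then have "l = f' z" using z(3) DERIV_unique by blast
      moreover have "(f y - f x) / (y - x) = l" using z yx by (simp add: field_simps)
      ultimately show ?thesis using z y yx by (intro exI[of _ z]) auto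
    qed
    then obtain z where "z \<noteq> x" "norm (z - x) < min s e" "(f y - f x) / (y - x) = f' z" by blast
    then show "norm ((f y - f x) / (y - x) - L) < r" using s by auto
  qed
qed

lemma DERIV_refl:
  "(f has_real_derivative D) (at (c - s)) \<Longrightarrow> ((\<lambda>t. f (c - t)) has_real_derivative -D) (at s)"
proof -
  assume a: "(f has_real_derivative D) (at (c - s))"
  have "((\<lambda>t. c - t) has_real_derivative -1) (at s)" by (auto intro!: derivative_eq_intros)
  from DERIV_chain2[of f D "\<lambda>t. c - t" s "-1", OF _ this] a show ?thesis by simp
qed

lemma DERIV_shift:
  "(f has_real_derivative D) (at (s + c)) \<Longrightarrow> ((\<lambda>t. f (t + c)) has_real_derivative D) (at s)"
proof -
  assume a: "(f has_real_derivative D) (at (s + c))"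
  have "((\<lambda>t. t + c) has_real_derivative 1) (at s)" by (auto intro!: derivative_eq_intros)
  from DERIV_chain2[of f D "\<lambda>t. t + c" s 1, OF _ this] a show ?thesis by simp
qed

lemma DERIV_neg:
  "(f has_real_derivative D) (at (- s)) \<Longrightarrow> ((\<lambda>t. - f (- t)) has_real_derivative D) (at s)"
proof -
  assume a: "(f has_real_derivative D) (at (- s))"
  have "((\<lambda>t. - t) has_real_derivative -1) (at s)" by (auto intro!: derivative_eq_intros)
  from DERIV_chain2[of f D "\<lambda>t. - t" s "-1", OF _ this] a
  have "((\<lambda>t. f (- t)) has_real_derivative - D) (at s)" by simp
  then show ?thesis using DERIV_minus by fastforce
qed

context gtrig
begin

lemma S_fun_sym: "(\<lambda>t. S (P - t)) = S" using S_sym by auto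
lemma S_fun_neg: "(\<lambda>t. - S (- t)) = S" using S_odd by auto
lemma S_fun_per: "(\<lambda>t. S (t + 2 * P * of_int k)) = S" using S_period by auto
lemma via_sym: "Q (\<lambda>t. S (P - t)) \<Longrightarrow> Q S" using S_fun_sym by simp
lemma via_neg: "Q (\<lambda>t. - S (- t)) \<Longrightarrow> Q S" using S_fun_neg by simp
lemma via_per: "Q (\<lambda>t. S (t + 2 * P * of_int k)) \<Longrightarrow> Q S" using S_fun_per by simp
lemma zpow: "(0::real) ^ (2*n) = 0" using n1 by simp

lemma even_pow: "(- x) ^ (2*n) = (x::real) ^ (2*n)"
  by (simp add: power_mult)

lemma S_cont0: "continuous_on {-P/4..P/4} S"
proof -
  have c1: "continuous_on {0..P/4} S"
  proof -
    have "continuous_on {0..P/4} SB" using SB_cont by (rule continuous_on_subset) (use P_pos in auto)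
    then show ?thesis by (rule continuous_on_cong[THEN iffD1, rotated 2]) (auto simp: S_eq_SB)
  qed
  have c2: "continuous_on {-P/4..0} S"
  proof -
    have "continuous_on {-P/4..0} (\<lambda>t. - S (- t))"
      by (intro continuous_intros continuous_on_compose2[OF c1]) auto
    then show ?thesis by (rule via_neg)
  qed
  have "continuous_on ({-P/4..0} \<union> {0..P/4}) S" by (rule continuous_on_closed_Un[OF _ _ c2 c1]) auto
  moreover have "{-P/4..0} \<union> {0..P/4} = {-P/4..P/4}" using P_pos by auto
  ultimately show ?thesis by simp
qed

lemma S_contP2: "continuous_on {P/4..3*P/4} S"
proof -
  have c1: "continuous_on {P/4..P/2} S"
  proof -
    have "continuous_on {P/4..P/2} SB" using SB_cont by (rule continuous_on_subset) (use P_pos in auto)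
    then show ?thesis by (rule continuous_on_cong[THEN iffD1, rotated 2]) (use P_pos in \<open>auto simp: S_eq_SB\<close>)
  qed
  have c2: "continuous_on {P/2..3*P/4} S"
  proof -
    have "continuous_on {P/2..3*P/4} (\<lambda>t. S (P - t))"
      by (intro continuous_intros continuous_on_compose2[OF c1]) auto
    then show ?thesis by (rule via_sym)
  qed
  have "continuous_on ({P/4..P/2} \<union> {P/2..3*P/4}) S" by (rule continuous_on_closed_Un[OF _ _ c1 c2]) auto
  moreover have "{P/4..P/2} \<union> {P/2..3*P/4} = {P/4..3*P/4}" using P_pos by auto
  ultimately show ?thesis by simp
qed

lemma S_isCont0: "isCont S 0"
  using S_cont0 P_pos continuous_on_interior[of "{-P/4..P/4}" S 0] by auto

lemma S_isContP2: "isCont S (P/2)"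
  using S_contP2 P_pos continuous_on_interior[of "{P/4..3*P/4}" S "P/2"] by auto

lemma D_pos: "0 < s \<Longrightarrow> s < P/2 \<Longrightarrow> (S has_real_derivative sqrt (1 - S s ^ (2*n))) (at s)"
proof -
  assume s: "0 < s" "s < P/2"
  have "(SB has_real_derivative sqrt (1 - SB s ^ (2*n))) (at s)" by (rule SB_deriv[OF s])
  then have "(SB has_real_derivative sqrt (1 - S s ^ (2*n))) (at s)" using s by (simp add: S_eq_SB)
  then show ?thesis
    by (rule has_field_derivative_transform_within_open[where S="{0<..<P/2}"]) (use s in \<open>auto simp: S_eq_SB\<close>)
qed

lemma D_neg: "-P/2 < s \<Longrightarrow> s < 0 \<Longrightarrow> (S has_real_derivative sqrt (1 - S s ^ (2*n))) (at s)"
proof -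
  assume s: "-P/2 < s" "s < 0"
  have "(S has_real_derivative sqrt (1 - S (-s) ^ (2*n))) (at (- s))" using D_pos s by auto
  then have "((\<lambda>t. - S (- t)) has_real_derivative sqrt (1 - S (-s) ^ (2*n))) (at s)" by (rule DERIV_neg)
  then have "(S has_real_derivative sqrt (1 - S (-s) ^ (2*n))) (at s)" by (rule via_neg)
  then show ?thesis by (simp add: S_odd even_pow)
qed

lemma D_right: "P/2 < s \<Longrightarrow> s < P \<Longrightarrow> (S has_real_derivative - sqrt (1 - S s ^ (2*n))) (at s)"
proof -
  assume s: "P/2 < s" "s < P"
  have "(S has_real_derivative sqrt (1 - S (P - s) ^ (2*n))) (at (P - s))" using D_pos s by auto
  then have "((\<lambda>t. S (P - t)) has_real_derivative - sqrt (1 - S (P - s) ^ (2*n))) (at s)" by (rule DERIV_refl)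
  then have "(S has_real_derivative - sqrt (1 - S (P - s) ^ (2*n))) (at s)" by (rule via_sym)
  then show ?thesis by (simp add: S_sym)
qed

lemma D0: "(S has_real_derivative 1) (at 0)"
proof (rule deriv_limit[where e="P/4" and f'="\<lambda>t. sqrt (1 - S t ^ (2*n))"])
  show "0 < P/4" using P_pos by simp
  show "continuous_on {0 - P/4..0 + P/4} S" using S_cont0 by simp
  fix t assume t: "0 - P/4 < t" "t < 0 + P/4" "t \<noteq> 0"
  then show "(S has_real_derivative sqrt (1 - S t ^ (2*n))) (at t)"
    using D_pos[of t] D_neg[of t] by (cases "t < 0") auto
next
  have "isCont (\<lambda>t. sqrt (1 - S t ^ (2*n))) 0"
    by (intro continuous_intros S_isCont0)
  then show "((\<lambda>t. sqrt (1 - S t ^ (2*n))) \<longlongrightarrow> 1) (at 0)"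
    by (simp add: isCont_def S0 zpow)
qed

lemma DP2: "(S has_real_derivative 0) (at (P/2))"
proof (rule deriv_limit[where e="P/4" and f'="\<lambda>t. (if t \<le> P/2 then 1 else -1) * sqrt (1 - S t ^ (2*n))"])
  show "0 < P/4" using P_pos by simp
  show "continuous_on {P/2 - P/4..P/2 + P/4} S" using S_contP2 by (simp add: field_simps)
  fix t assume t: "P/2 - P/4 < t" "t < P/2 + P/4" "t \<noteq> P/2"
  then show "(S has_real_derivative (if t \<le> P/2 then 1 else -1) * sqrt (1 - S t ^ (2*n))) (at t)"
    using D_pos[of t] D_right[of t] P_pos by (cases "t < P/2") auto
next
  have "isCont (\<lambda>t. sqrt (1 - S t ^ (2*n))) (P/2)"
    by (intro continuous_intros S_isContP2)
  then have "((\<lambda>t. sqrt (1 - S t ^ (2*n))) \<longlongrightarrow> 0) (at (P/2))"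
    by (simp add: isCont_def SP2)
  then have "((\<lambda>t. \<bar>sqrt (1 - S t ^ (2*n))\<bar>) \<longlongrightarrow> 0) (at (P/2))"
    using tendsto_rabs by fastforce
  then have "((\<lambda>t. \<bar>(if t \<le> P/2 then 1 else -1) * sqrt (1 - S t ^ (2*n))\<bar>) \<longlongrightarrow> 0) (at (P/2))"
    by (rule Lim_transform_eventually) (auto simp: abs_mult)
  then show "((\<lambda>t. (if t \<le> P/2 then 1 else -1) * sqrt (1 - S t ^ (2*n))) \<longlongrightarrow> 0) (at (P/2))"
    by (simp only: tendsto_rabs_zero_iff)
qed

lemma S_diff: "\<exists>D. (S has_real_derivative D) (at s)"
proof (rule sym_closure[where Q="\<lambda>s. \<exists>D. (S has_real_derivative D) (at s)"])
  fix s assume s: "0 \<le> s" "s \<le> P/2"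
  show "\<exists>D. (S has_real_derivative D) (at s)"
  proof (cases "s = 0")
    case True then show ?thesis using D0 by auto
  next
    case False
    show ?thesis
    proof (cases "s = P/2")
      case True
      show ?thesis unfolding True using DP2 by blast
    next
      case False
      then show ?thesis using D_pos[of s] s \<open>s \<noteq> 0\<close> by auto
    qed
  qed
next
  fix s assume "\<exists>D. (S has_real_derivative D) (at s)"
  then obtain D where D: "(S has_real_derivative D) (at s)" by blast
  have "(S has_real_derivative D) (at (P - (P - s)))" using D by simp
  then have "((\<lambda>t. S (P - t)) has_real_derivative -D) (at (P - s))" by (rule DERIV_refl)
  then have "(S has_real_derivative -D) (at (P - s))" by (rule via_sym)
  then show "\<exists>D. (S has_real_derivative D) (at (P - s))" by blast
  have "(S has_real_derivative D) (at (- (- s)))" using D by simp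
  then have "((\<lambda>t. - S (- t)) has_real_derivative D) (at (- s))" by (rule DERIV_neg)
  then have "(S has_real_derivative D) (at (- s))" by (rule via_neg)
  then show "\<exists>D. (S has_real_derivative D) (at (- s))" by blast
next
  fix s k assume "\<exists>D. (S has_real_derivative D) (at s)"
  then obtain D where D: "(S has_real_derivative D) (at s)" by blast
  have "(S has_real_derivative D) (at ((s + 2 * P * of_int k) + 2 * P * of_int (-k)))" using D by simp
  then have "((\<lambda>t. S (t + 2 * P * of_int (-k))) has_real_derivative D) (at (s + 2 * P * of_int k))"
    by (rule DERIV_shift)
  then have "(S has_real_derivative D) (at (s + 2 * P * of_int k))" by (rule via_per)
  then show "\<exists>D. (S has_real_derivative D) (at (s + 2 * P * of_int k))" by blast
qed

lemma S_deriv: "(S has_real_derivative C s) (at s)"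
proof -
  obtain D where D: "(S has_real_derivative D) (at s)" using S_diff by blast
  then have "C s = D" unfolding cos_gen_def by (rule DERIV_imp_deriv)
  then show ?thesis using D by simp
qed

lemma S_cont: "continuous_on A S"
  by (meson S_deriv DERIV_isCont continuous_at_imp_continuous_on)

lemma S_isCont: "isCont S s"
  using S_deriv DERIV_isCont by blast

lemma C_base: "0 \<le> s \<Longrightarrow> s \<le> P/2 \<Longrightarrow> C s = sqrt (1 - S s ^ (2*n))"
proof -
  assume s: "0 \<le> s" "s \<le> P/2"
  consider "s = 0" | "s = P/2" | "0 < s" "s < P/2" using s by linarith
  then show ?thesis
  proof cases
    case 1 then show ?thesis using DERIV_unique[OF S_deriv[of 0] D0] by (simp add: S0 zpow)
  next
    case 2 then show ?thesis unfolding 2 using DERIV_unique[OF S_deriv[of "P/2"] DP2] by (simp add: SP2)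
  next
    case 3 then show ?thesis using DERIV_unique[OF S_deriv[of s] D_pos] by simp
  qed
qed

lemma C_sym: "C (P - s) = - C s"
proof -
  have "(S has_real_derivative C s) (at (P - (P - s)))" using S_deriv by simp
  then have "((\<lambda>t. S (P - t)) has_real_derivative - C s) (at (P - s))" by (rule DERIV_refl)
  then have "(S has_real_derivative - C s) (at (P - s))" by (rule via_sym)
  then show ?thesis using DERIV_unique[OF S_deriv] by blast
qed

lemma C_even: "C (- s) = C s"
proof -
  have "(S has_real_derivative C s) (at (- (- s)))" using S_deriv by simp
  then have "((\<lambda>t. - S (- t)) has_real_derivative C s) (at (- s))" by (rule DERIV_neg)
  then have "(S has_real_derivative C s) (at (- s))" by (rule via_neg)
  then show ?thesis using DERIV_unique[OF S_deriv] by blast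
qed

lemma C_period: "C (s + 2 * P * of_int k) = C s"
proof -
  have "(S has_real_derivative C s) (at ((s + 2 * P * of_int k) + 2 * P * of_int (-k)))" using S_deriv by simp
  then have "((\<lambda>t. S (t + 2 * P * of_int (-k))) has_real_derivative C s) (at (s + 2 * P * of_int k))"
    by (rule DERIV_shift)
  then have "(S has_real_derivative C s) (at (s + 2 * P * of_int k))" by (rule via_per)
  then show ?thesis using DERIV_unique[OF S_deriv] by blast
qed

lemma S_le1_base: "0 \<le> s \<Longrightarrow> s \<le> P/2 \<Longrightarrow> 0 \<le> S s \<and> S s \<le> 1"
  using SB_prop[of s] S_eq_SB by auto

lemma SC_id: "C s ^ 2 + S s ^ (2*n) = 1"
proof (rule sym_closure[where Q="\<lambda>s. C s ^ 2 + S s ^ (2*n) = 1"])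
  fix s assume s: "0 \<le> s" "s \<le> P/2"
  have "S s ^ (2*n) \<le> 1" using S_le1_base[OF s] by (simp add: power_le_one)
  then show "C s ^ 2 + S s ^ (2*n) = 1" using C_base[OF s] by simp
next
  fix s assume "C s ^ 2 + S s ^ (2*n) = 1"
  then show "C (P - s) ^ 2 + S (P - s) ^ (2*n) = 1" "C (- s) ^ 2 + S (- s) ^ (2*n) = 1"
    by (simp_all add: C_sym S_sym C_even S_odd even_pow)
next
  fix s k assume "C s ^ 2 + S s ^ (2*n) = 1"
  then show "C (s + 2 * P * of_int k) ^ 2 + S (s + 2 * P * of_int k) ^ (2*n) = 1"
    by (simp add: C_period S_period)
qed

end

context gtrig
begin

lemma C_fun_sym: "(\<lambda>t. - C (P - t)) = C" using C_sym by auto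
lemma C_fun_neg: "(\<lambda>t. C (- t)) = C" using C_even by auto
lemma C_fun_per: "(\<lambda>t. C (t + 2 * P * of_int k)) = C" using C_period by auto
lemma viaC_sym: "Q (\<lambda>t. - C (P - t)) \<Longrightarrow> Q C" using C_fun_sym by simp
lemma viaC_neg: "Q (\<lambda>t. C (- t)) \<Longrightarrow> Q C" using C_fun_neg by simp
lemma viaC_per: "Q (\<lambda>t. C (t + 2 * P * of_int k)) \<Longrightarrow> Q C" using C_fun_per by simp

lemma odd_pow: "(- x) ^ (2*n - 1) = - ((x::real) ^ (2*n - 1))"
proof -
  have "odd (2*n - 1)" using n1 by simp
  then show ?thesis by (simp add: power_minus_odd)
qed

lemma abs_pow2n: "\<bar>x\<bar> ^ (2*n) = (x::real) ^ (2*n)"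
  by (simp add: power_even_abs)

lemma C_base2: "-P/2 \<le> s \<Longrightarrow> s \<le> P/2 \<Longrightarrow> C s = sqrt (1 - S s ^ (2*n))"
  using C_base[of s] C_base[of "-s"] C_even[of s] S_odd[of s] even_pow[of "S s"]
  by (cases "0 \<le> s") auto

lemma S_strict_base: "0 \<le> s1 \<Longrightarrow> s1 < s2 \<Longrightarrow> s2 \<le> P/2 \<Longrightarrow> S s1 < S s2"
  using SB_strict[of s1 s2] S_eq_SB[of s1] S_eq_SB[of s2] by auto

lemma S_abs_lt1: "-P/2 < s \<Longrightarrow> s < P/2 \<Longrightarrow> \<bar>S s\<bar> < 1"
proof -
  assume s: "-P/2 < s" "s < P/2"
  have "\<bar>s\<bar> < P/2" using s by auto
  then have "S \<bar>s\<bar> < 1" using S_strict_base[of "\<bar>s\<bar>" "P/2"] by (simp add: SP2)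
  moreover have "0 \<le> S \<bar>s\<bar>" using S_le1_base[of "\<bar>s\<bar>"] \<open>\<bar>s\<bar> < P/2\<close> by auto
  moreover have "\<bar>S s\<bar> = S \<bar>s\<bar>"
    using S_odd[of s] S_le1_base[of "\<bar>s\<bar>"] \<open>\<bar>s\<bar> < P/2\<close> by (cases "0 \<le> s") auto
  ultimately show ?thesis by simp
qed

lemma DC_inner:
  assumes s: "-P/2 < s" "s < P/2"
  shows "(C has_real_derivative - (real n * S s ^ (2*n - 1))) (at s)"
proof -
  have u: "0 < 1 - S s ^ (2*n)"
  proof -
    have "\<bar>S s\<bar> ^ (2*n) < 1" using S_abs_lt1[OF s] n1 by (intro pow_lt1) auto
    then show ?thesis by (simp add: abs_pow2n)
  qed
  have dS: "((\<lambda>t. S t ^ (2*n)) has_real_derivative (real (2*n) * S s ^ (2*n - 1) * C s)) (at s)"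
    using DERIV_chain2[OF DERIV_pow[of "2*n" "S s"] S_deriv[of s]] by simp
  have "((\<lambda>t. sqrt (1 - S t ^ (2*n))) has_real_derivative
          (inverse (sqrt (1 - S s ^ (2*n))) / 2) * (- (real (2*n) * S s ^ (2*n - 1) * C s))) (at s)"
    using DERIV_chain2[of sqrt _ "\<lambda>t. 1 - S t ^ (2*n)", OF DERIV_real_sqrt[OF u] DERIV_diff[OF DERIV_const dS]]
    by simp
  moreover have "C s = sqrt (1 - S s ^ (2*n))" using C_base2 s by auto
  ultimately have d: "((\<lambda>t. sqrt (1 - S t ^ (2*n))) has_real_derivative - (real n * S s ^ (2*n - 1))) (at s)"
    using u by (simp add: field_simps)
  show ?thesis
    by (rule has_field_derivative_transform_within_open[OF d, where S="{-P/2<..<P/2}"])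
       (use s in \<open>auto simp: C_base2\<close>)
qed

lemma C_cont2: "continuous_on {-P/2..P/2} C"
proof -
  have "continuous_on {-P/2..P/2} (\<lambda>t. sqrt (1 - S t ^ (2*n)))"
    by (intro continuous_intros S_cont)
  then show ?thesis by (rule continuous_on_cong[THEN iffD1, rotated 2]) (auto simp: C_base2)
qed

lemma C_contP2: "continuous_on {P/4..3*P/4} C"
proof -
  have c1: "continuous_on {P/4..P/2} C" using C_cont2 by (rule continuous_on_subset) (use P_pos in auto)
  have c2: "continuous_on {P/2..3*P/4} C"
  proof -
    have "continuous_on {P/2..3*P/4} (\<lambda>t. - C (P - t))"
      by (intro continuous_intros continuous_on_compose2[OF c1]) auto
    then show ?thesis by (rule viaC_sym)
  qed
  have "continuous_on ({P/4..P/2} \<union> {P/2..3*P/4}) C" by (rule continuous_on_closed_Un[OF _ _ c1 c2]) auto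
  moreover have "{P/4..P/2} \<union> {P/2..3*P/4} = {P/4..3*P/4}" using P_pos by auto
  ultimately show ?thesis by simp
qed

lemma DC_symP: "(C has_real_derivative - (real n * S s ^ (2*n - 1))) (at s) \<Longrightarrow>
    (C has_real_derivative - (real n * S (P - s) ^ (2*n - 1))) (at (P - s))"
proof -
  assume a: "(C has_real_derivative - (real n * S s ^ (2*n - 1))) (at s)"
  then have "(C has_real_derivative - (real n * S s ^ (2*n - 1))) (at (P - (P - s)))" by simp
  then have "((\<lambda>t. C (P - t)) has_real_derivative (real n * S s ^ (2*n - 1))) (at (P - s))"
    using DERIV_refl by fastforce
  then have "((\<lambda>t. - C (P - t)) has_real_derivative - (real n * S s ^ (2*n - 1))) (at (P - s))"
    by (rule DERIV_minus)
  then have "(C has_real_derivative - (real n * S s ^ (2*n - 1))) (at (P - s))" by (rule viaC_sym)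
  then show ?thesis by (simp add: S_sym)
qed

lemma DC_neg: "(C has_real_derivative - (real n * S s ^ (2*n - 1))) (at s) \<Longrightarrow>
    (C has_real_derivative - (real n * S (- s) ^ (2*n - 1))) (at (- s))"
proof -
  assume a: "(C has_real_derivative - (real n * S s ^ (2*n - 1))) (at s)"
  then have "(C has_real_derivative - (real n * S s ^ (2*n - 1))) (at (0 - (- s)))" by simp
  then have "((\<lambda>t. C (0 - t)) has_real_derivative (real n * S s ^ (2*n - 1))) (at (- s))"
    using DERIV_refl by fastforce
  then have "((\<lambda>t. C (- t)) has_real_derivative (real n * S s ^ (2*n - 1))) (at (- s))" by simp
  then have "(C has_real_derivative (real n * S s ^ (2*n - 1))) (at (- s))" by (rule viaC_neg)
  then show ?thesis using odd_pow[of "S s"] by (simp add: S_odd)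
qed

lemma DC_per: "(C has_real_derivative - (real n * S s ^ (2*n - 1))) (at s) \<Longrightarrow>
    (C has_real_derivative - (real n * S (s + 2 * P * of_int k) ^ (2*n - 1))) (at (s + 2 * P * of_int k))"
proof -
  assume a: "(C has_real_derivative - (real n * S s ^ (2*n - 1))) (at s)"
  then have "(C has_real_derivative - (real n * S s ^ (2*n - 1))) (at ((s + 2 * P * of_int k) + 2 * P * of_int (-k)))" by simp
  then have "((\<lambda>t. C (t + 2 * P * of_int (-k))) has_real_derivative - (real n * S s ^ (2*n - 1))) (at (s + 2 * P * of_int k))"
    by (rule DERIV_shift)
  then have "(C has_real_derivative - (real n * S s ^ (2*n - 1))) (at (s + 2 * P * of_int k))" by (rule viaC_per)
  then show ?thesis by (simp add: S_period)
qed

lemma DC_P2: "(C has_real_derivative - (real n * S (P/2) ^ (2*n - 1))) (at (P/2))"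
proof (rule deriv_limit[where e="P/4" and f'="\<lambda>t. - (real n * S t ^ (2*n - 1))"])
  show "0 < P/4" using P_pos by simp
  show "continuous_on {P/2 - P/4..P/2 + P/4} C" using C_contP2 by (simp add: field_simps)
  fix t assume t: "P/2 - P/4 < t" "t < P/2 + P/4" "t \<noteq> P/2"
  show "(C has_real_derivative - (real n * S t ^ (2*n - 1))) (at t)"
  proof (cases "t < P/2")
    case True then show ?thesis using DC_inner t by auto
  next
    case False
    then have "-P/2 < P - t" "P - t < P/2" using t by auto
    then have "(C has_real_derivative - (real n * S (P - t) ^ (2*n - 1))) (at (P - t))" using DC_inner by auto
    from DC_symP[OF this] show ?thesis by simp
  qed
next
  have "isCont (\<lambda>t. - (real n * S t ^ (2*n - 1))) (P/2)"
    by (intro continuous_intros S_isCont)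
  then show "((\<lambda>t. - (real n * S t ^ (2*n - 1))) \<longlongrightarrow> - (real n * S (P/2) ^ (2*n - 1))) (at (P/2))"
    by (simp add: isCont_def)
qed

lemma C_deriv: "(C has_real_derivative - (real n * S s ^ (2*n - 1))) (at s)"
proof (rule sym_closure[where Q="\<lambda>s. (C has_real_derivative - (real n * S s ^ (2*n - 1))) (at s)"])
  fix s assume s: "0 \<le> s" "s \<le> P/2"
  show "(C has_real_derivative - (real n * S s ^ (2*n - 1))) (at s)"
  proof (cases "s = P/2")
    case True show ?thesis unfolding True by (rule DC_P2)
  next
    case False then show ?thesis using DC_inner[of s] s P_pos by auto
  qed
qed (erule DC_symP, erule DC_neg, erule DC_per)

lemma C_isCont: "isCont C s"
  using C_deriv DERIV_isCont by blast

lemma C0: "C 0 = 1" using C_base[of 0] P_pos by (simp add: S0 zpow)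
lemma CP2: "C (P/2) = 0" using C_base[of "P/2"] P_pos by (simp add: SP2)
lemma S3P2: "S (3*P/2) = -1"
  using S_shiftP[of "P/2"] SP2 by (simp add: field_simps)
lemma C3P2: "C (3*P/2) = 0"
  using C_sym[of "-P/2"] C_even[of "P/2"] CP2 by (simp add: field_simps)

lemma S_abs_le1: "\<bar>S s\<bar> \<le> 1"
proof -
  have "S s ^ (2*n) \<le> 1" using SC_id[of s] zero_le_power2[of "C s"] by linarith
  then have a: "\<bar>S s\<bar> ^ (2*n) \<le> 1" by (simp add: abs_pow2n)
  show ?thesis
  proof (rule ccontr)
    assume "\<not> \<bar>S s\<bar> \<le> 1"
    then have "1 < \<bar>S s\<bar> ^ (2*n)" using n1 by (intro one_less_power) auto
    then show False using a by simp
  qed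
qed

lemma S_surj_base: "0 \<le> y \<Longrightarrow> y \<le> 1 \<Longrightarrow> \<exists>s. 0 \<le> s \<and> s \<le> P/2 \<and> S s = y"
  using IVT'[of S 0 y "P/2"] S_cont[of "{0..P/2}"] P_pos by (auto simp: S0 SP2)

lemma SC_surj:
  assumes pq: "p ^ 2 + q ^ (2*n) = 1"
  shows "\<exists>\<theta>. C \<theta> = p \<and> S \<theta> = q"
proof -
  have q1: "\<bar>q\<bar> \<le> 1"
  proof (rule ccontr)
    assume "\<not> \<bar>q\<bar> \<le> 1"
    then have "1 < \<bar>q\<bar> ^ (2*n)" using n1 by (intro one_less_power) auto
    then have "1 < q ^ (2*n)" by (simp add: abs_pow2n)
    then show False using pq by (smt (verit) zero_le_power2)
  qed
  obtain t where t: "0 \<le> t" "t \<le> P/2" "S t = \<bar>q\<bar>" using S_surj_base[of "\<bar>q\<bar>"] q1 by auto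
  have "C t = sqrt (1 - \<bar>q\<bar> ^ (2*n))" using C_base[OF t(1,2)] t(3) by simp
  also have "\<bar>q\<bar> ^ (2*n) = q ^ (2*n)" by (simp add: abs_pow2n)
  also have "1 - q ^ (2*n) = p ^ 2" using pq by simp
  finally have Ct: "C t = \<bar>p\<bar>" by simp
  consider "0 \<le> q" "0 \<le> p" | "0 \<le> q" "p < 0" | "q < 0" "0 \<le> p" | "q < 0" "p < 0" by linarith
  then show ?thesis
  proof cases
    case 1 then show ?thesis using t Ct by (intro exI[of _ t]) auto
  next
    case 2 then show ?thesis using t Ct by (intro exI[of _ "P - t"]) (auto simp: C_sym S_sym)
  next
    case 3 then show ?thesis using t Ct by (intro exI[of _ "- t"]) (auto simp: C_even S_odd)
  next
    case 4
    have "C (t - P) = C (P - t)" using C_even[of "P - t"] by simp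
    moreover have "S (t - P) = - S (P - t)" using S_odd[of "P - t"] by simp
    ultimately show ?thesis using t Ct 4 by (intro exI[of _ "t - P"]) (auto simp: C_sym S_sym)
  qed
qed

end

lemma within_to_at:
  assumes "0 < t" "(f has_real_derivative D) (at t within {0..})"
  shows "(f has_real_derivative D) (at t)"
proof -
  have "(f has_real_derivative D) (at t within {0<..})"
    using assms(2) by (rule DERIV_subset) auto
  moreover have "at t within {0<..} = at t" using assms(1) by (intro at_within_open) auto
  ultimately show ?thesis by simp
qed

lemma within_cont:
  assumes "\<And>t. 0 \<le> t \<Longrightarrow> (f has_real_derivative D t) (at t within {0..})"
  shows "continuous_on {0..} f"
  unfolding continuous_on_eq_continuous_within
  using assms DERIV_continuous by (metis atLeast_iff)

lemma pow_diff_bound: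
  fixes a b M :: real
  assumes "\<bar>a\<bar> \<le> M" "\<bar>b\<bar> \<le> M"
  shows "\<bar>a ^ k - b ^ k\<bar> \<le> real k * M ^ (k - 1) * \<bar>a - b\<bar>"
proof -
  have "a ^ k - b ^ k = (a - b) * (\<Sum>i<k. b ^ (k - Suc i) * a ^ i)" by (rule power_diff_sumr2)
  then have "\<bar>a ^ k - b ^ k\<bar> = \<bar>a - b\<bar> * \<bar>\<Sum>i<k. b ^ (k - Suc i) * a ^ i\<bar>" by (simp add: abs_mult)
  also have "\<bar>\<Sum>i<k. b ^ (k - Suc i) * a ^ i\<bar> \<le> (\<Sum>i<k. \<bar>b ^ (k - Suc i) * a ^ i\<bar>)" by (rule sum_abs)
  also have "\<dots> \<le> (\<Sum>i<k. M ^ (k - 1))"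
  proof (rule sum_mono)
    fix i assume i: "i \<in> {..<k}"
    have "\<bar>b ^ (k - Suc i) * a ^ i\<bar> = \<bar>b\<bar> ^ (k - Suc i) * \<bar>a\<bar> ^ i" by (simp add: abs_mult power_abs)
    also have "\<dots> \<le> M ^ (k - Suc i) * M ^ i"
      using assms by (intro mult_mono power_mono) auto
    also have "\<dots> = M ^ (k - 1)" using i by (simp add: power_add[symmetric])
    finally show "\<bar>b ^ (k - Suc i) * a ^ i\<bar> \<le> M ^ (k - 1)" .
  qed
  also have "\<dots> = real k * M ^ (k - 1)" by simp
  finally have "\<bar>a ^ k - b ^ k\<bar> \<le> \<bar>a - b\<bar> * (real k * M ^ (k - 1))"
    by (simp add: mult_left_mono)
  then show ?thesis by (simp only: mult.commute)
qed

lemma gronwall_uniq: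
  fixes xa ua xb ub :: "real \<Rightarrow> real" and a M :: real and k :: nat
  assumes dx1: "\<And>t. 0 \<le> t \<Longrightarrow> (xa has_real_derivative ua t) (at t within {0..})"
    and du1: "\<And>t. 0 \<le> t \<Longrightarrow> (ua has_real_derivative - (a * xa t ^ k)) (at t within {0..})"
    and dx2: "\<And>t. 0 \<le> t \<Longrightarrow> (xb has_real_derivative ub t) (at t within {0..})"
    and du2: "\<And>t. 0 \<le> t \<Longrightarrow> (ub has_real_derivative - (a * xb t ^ k)) (at t within {0..})"
    and init: "xa 0 = xb 0" "ua 0 = ub 0"
    and bd1: "\<And>t. 0 \<le> t \<Longrightarrow> \<bar>xa t\<bar> \<le> M" and bd2: "\<And>t. 0 \<le> t \<Longrightarrow> \<bar>xb t\<bar> \<le> M"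
    and a: "0 \<le> a"
    and T: "0 \<le> T"
  shows "xa T = xb T"
proof -
  define L where "L = 1 + a * real k * M ^ (k - 1)"
  define d where "d t = (xa t - xb t)\<^sup>2 + (ua t - ub t)\<^sup>2" for t
  define d' where "d' t = 2 * (xa t - xb t) * (ua t - ub t) + 2 * (ua t - ub t) * (- (a * xa t ^ k) + a * xb t ^ k)" for t
  define e where "e t = exp (- L * t) * d t" for t
  have M0: "0 \<le> M" using bd1[of 0] by simp
  have d'_le: "d' t \<le> L * d t" if "0 \<le> t" for t
  proof -
    let ?X = "xa t - xb t" and ?U = "ua t - ub t"
    have pb: "\<bar>xa t ^ k - xb t ^ k\<bar> \<le> real k * M ^ (k - 1) * \<bar>?X\<bar>"
      using pow_diff_bound bd1 bd2 that by blast
    have B: "0 \<le> real k * M ^ (k - 1)" using M0 by simp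
    have "d' t = 2 * ?X * ?U - 2 * a * ?U * (xa t ^ k - xb t ^ k)" by (simp add: d'_def algebra_simps)
    also have "\<dots> \<le> 2 * \<bar>?X\<bar> * \<bar>?U\<bar> + 2 * a * \<bar>?U\<bar> * \<bar>xa t ^ k - xb t ^ k\<bar>"
    proof -
      have "?X * ?U \<le> \<bar>?X\<bar> * \<bar>?U\<bar>" by (simp add: abs_mult[symmetric])
      then have "2 * ?X * ?U \<le> 2 * \<bar>?X\<bar> * \<bar>?U\<bar>" by linarith
      moreover have "- (2 * a * ?U * (xa t ^ k - xb t ^ k)) \<le> 2 * a * \<bar>?U\<bar> * \<bar>xa t ^ k - xb t ^ k\<bar>"
        proof -
        have "- (2 * a * ?U * (xa t ^ k - xb t ^ k)) \<le> \<bar>2 * a * ?U * (xa t ^ k - xb t ^ k)\<bar>"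
          by (rule abs_ge_minus_self)
        also have "\<dots> = 2 * a * \<bar>?U\<bar> * \<bar>xa t ^ k - xb t ^ k\<bar>" using a by (simp add: abs_mult)
        finally show ?thesis .
      qed
      ultimately show ?thesis by linarith
    qed
    also have "\<dots> \<le> 2 * \<bar>?X\<bar> * \<bar>?U\<bar> + 2 * a * \<bar>?U\<bar> * (real k * M ^ (k - 1) * \<bar>?X\<bar>)"
      using pb a by (intro add_left_mono mult_left_mono) auto
    also have "\<dots> = (1 + a * real k * M ^ (k - 1)) * (2 * \<bar>?X\<bar> * \<bar>?U\<bar>)" by (simp add: algebra_simps)
    also have "\<dots> \<le> (1 + a * real k * M ^ (k - 1)) * (?X\<^sup>2 + ?U\<^sup>2)"
    proof (rule mult_left_mono)
      have "0 \<le> (\<bar>?X\<bar> - \<bar>?U\<bar>)\<^sup>2" by simp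
      then show "2 * \<bar>?X\<bar> * \<bar>?U\<bar> \<le> ?X\<^sup>2 + ?U\<^sup>2" by (simp add: power2_eq_square algebra_simps)
      show "0 \<le> 1 + a * real k * M ^ (k - 1)" using a B by (simp add: mult.assoc)
    qed
    finally show ?thesis by (simp add: L_def d_def)
  qed
  have de: "(e has_real_derivative exp (- L * t) * (d' t - L * d t)) (at t within {0..})" if "0 \<le> t" for t
  proof -
    have "(d has_real_derivative d' t) (at t within {0..})"
      unfolding d_def[abs_def] d'_def
      using dx1[OF that] du1[OF that] dx2[OF that] du2[OF that]
      by (auto intro!: derivative_eq_intros simp: algebra_simps)
    then show ?thesis unfolding e_def[abs_def]
      by (auto intro!: derivative_eq_intros simp: algebra_simps)
  qed
  have "e T \<le> e 0"
  proof (rule DERIV_nonpos_imp_decreasing_open[OF T])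
    fix t assume t: "0 < t" "t < T"
    have "(e has_real_derivative exp (- L * t) * (d' t - L * d t)) (at t)"
      using de[of t] t by (intro within_to_at) auto
    moreover have "exp (- L * t) * (d' t - L * d t) \<le> 0"
      using d'_le[of t] t by (intro mult_nonneg_nonpos) auto
    ultimately show "\<exists>y. (e has_real_derivative y) (at t) \<and> y \<le> 0" by blast
  next
    have "continuous_on {0..} e" using de by (rule within_cont)
    then show "continuous_on {0..T} e" by (rule continuous_on_subset) auto
  qed
  moreover have "e 0 = 0" using init by (simp add: e_def d_def)
  ultimately have "d T \<le> 0" by (simp add: e_def mult_le_0_iff)
  then have "(xa T - xb T)\<^sup>2 \<le> 0" unfolding d_def by (smt (verit) zero_le_power2)
  then show ?thesis by simp
qed

lemma DERIV_eq: "(f has_real_derivative D) F \<Longrightarrow> D = E \<Longrightarrow> (f has_real_derivative E) F"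
  by simp

locale hsys = A: gtrig \<alpha> + B: gtrig \<beta> for \<alpha> \<beta> :: nat +
  fixes x0 y0 z0 v0 w0 :: real
  assumes x0: "x0 \<noteq> 0" and y0: "y0 \<noteq> 0"
    and ham: "x0 ^ (2*\<alpha>) * (v0\<^sup>2 + y0 ^ (2*\<beta>) * w0\<^sup>2) = 1"
begin

definition "cc = v0\<^sup>2 + y0 ^ (2*\<beta>) * w0\<^sup>2"
definition "om = 1 / \<bar>x0\<bar>"
definition "th t = om * t + A.P / 2"
definition "Xs t = x0 * A.S (th t)"
definition "Us t = x0 * om * A.C (th t)"
definition "G t = x0 ^ (2*\<alpha>) / (real \<alpha> + 1) * (t - A.S (th t) * A.C (th t) / om)"

lemma cc_x0: "x0 ^ (2*\<alpha>) * cc = 1" using ham by (simp add: cc_def)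
lemma x0p: "0 < x0 ^ (2*\<alpha>)" using x0 by (simp add: zero_less_power_eq)
lemma cc_pos: "0 < cc" using cc_x0 x0p by (metis zero_less_mult_pos zero_less_one)
lemma cc_eq: "cc = 1 / x0 ^ (2*\<alpha>)"
proof -
  have "x0 ^ (2*\<alpha>) \<noteq> 0" using x0 by simp
  then show ?thesis using cc_x0 x0 by (simp add: eq_divide_eq mult.commute)
qed
lemma om_pos: "0 < om" using x0 by (simp add: om_def)
lemma om2: "om\<^sup>2 = 1 / x0\<^sup>2" by (simp add: om_def power_divide)

lemma pow_split: "1 \<le> k \<Longrightarrow> (y::real) ^ (2*k) = y * y ^ (2*k - 1)"
  by (metis Suc_diff_1 One_nat_def mult_pos_pos pos2 zero_less_one less_le_trans power_Suc not_one_le_zero nat_less_le)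

lemma key_om: "x0 * om\<^sup>2 = x0 ^ (2*\<alpha> - 1) * cc"
proof -
  have "x0 ^ (2*\<alpha>) = x0 * x0 ^ (2*\<alpha> - 1)" using A.n1 by (rule pow_split)
  then have "x0 ^ (2*\<alpha> - 1) * cc = 1 / x0" using cc_eq x0 by (simp add: field_simps)
  moreover have "x0 * om\<^sup>2 = 1 / x0"
  proof -
    have "x0 * om\<^sup>2 = x0 * (1 / x0\<^sup>2)" by (simp add: om2)
    also have "\<dots> = 1 / x0" using x0 by (simp add: power2_eq_square)
    finally show ?thesis .
  qed
  ultimately show ?thesis by simp
qed

lemma th_deriv: "(th has_real_derivative om) (at t)"
  unfolding th_def[abs_def] by (auto intro!: derivative_eq_intros)

lemma SA_th_deriv: "((\<lambda>t. A.S (th t)) has_real_derivative A.C (th t) * om) (at t)"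
  by (rule DERIV_chain2[OF A.S_deriv th_deriv])

lemma CA_th_deriv: "((\<lambda>t. A.C (th t)) has_real_derivative - (real \<alpha> * A.S (th t) ^ (2*\<alpha> - 1)) * om) (at t)"
  by (rule DERIV_chain2[OF A.C_deriv th_deriv])

lemma th0': "th 0 = A.P / 2" by (simp add: th_def)
lemma Xs0: "Xs 0 = x0" by (simp add: Xs_def th0' A.SP2)
lemma Us0: "Us 0 = 0" by (simp add: Us_def th0' A.CP2)
lemma G0: "G 0 = 0" by (simp add: G_def th0' A.CP2)

lemma Xs_deriv: "(Xs has_real_derivative Us t) (at t)"
  unfolding Xs_def[abs_def] Us_def
  using DERIV_cmult[OF SA_th_deriv, of x0] by (simp add: mult.assoc mult.commute mult.left_commute)

lemma Xs_pow: "Xs t ^ k = x0 ^ k * A.S (th t) ^ k"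
  by (simp add: Xs_def power_mult_distrib)

lemma Us_deriv: "(Us has_real_derivative - (real \<alpha> * Xs t ^ (2*\<alpha> - 1) * cc)) (at t)"
proof -
  have "(Us has_real_derivative x0 * om * (- (real \<alpha> * A.S (th t) ^ (2*\<alpha> - 1)) * om)) (at t)"
    unfolding Us_def[abs_def] by (rule DERIV_cmult[OF CA_th_deriv])
  moreover have "x0 * om * (- (real \<alpha> * A.S (th t) ^ (2*\<alpha> - 1)) * om) = - (real \<alpha> * Xs t ^ (2*\<alpha> - 1) * cc)"
  proof -
    have "x0 * om * (- (real \<alpha> * A.S (th t) ^ (2*\<alpha> - 1)) * om) = - (real \<alpha> * A.S (th t) ^ (2*\<alpha> - 1) * (x0 * om\<^sup>2))"
      by (simp add: power2_eq_square)
    also have "\<dots> = - (real \<alpha> * A.S (th t) ^ (2*\<alpha> - 1) * (x0 ^ (2*\<alpha> - 1) * cc))" by (simp add: key_om)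
    also have "\<dots> = - (real \<alpha> * Xs t ^ (2*\<alpha> - 1) * cc)" by (simp add: Xs_pow)
    finally show ?thesis .
  qed
  ultimately show ?thesis by (rule DERIV_eq)
qed

lemma G_deriv: "(G has_real_derivative Xs t ^ (2*\<alpha>)) (at t)"
proof -
  let ?s = "A.S (th t)" and ?c = "A.C (th t)"
  have "((\<lambda>t. A.S (th t) * A.C (th t)) has_real_derivative
           ?c * om * ?c + ?s * (- (real \<alpha> * ?s ^ (2*\<alpha> - 1)) * om)) (at t)"
    using DERIV_mult[OF SA_th_deriv CA_th_deriv] by (simp add: mult_ac)
  then have "(G has_real_derivative x0 ^ (2*\<alpha>) / (real \<alpha> + 1) *
       (1 - (?c * om * ?c + ?s * (- (real \<alpha> * ?s ^ (2*\<alpha> - 1)) * om)) / om)) (at t)"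
    unfolding G_def[abs_def] by (intro DERIV_cmult DERIV_diff DERIV_ident DERIV_cdivide)
  moreover have "x0 ^ (2*\<alpha>) / (real \<alpha> + 1) *
       (1 - (?c * om * ?c + ?s * (- (real \<alpha> * ?s ^ (2*\<alpha> - 1)) * om)) / om) = Xs t ^ (2*\<alpha>)"
  proof -
    have s2: "?s * ?s ^ (2*\<alpha> - 1) = ?s ^ (2*\<alpha>)" using pow_split[OF A.n1, of ?s] by simp
    have id: "?c\<^sup>2 = 1 - ?s ^ (2*\<alpha>)" using A.SC_id[of "th t"] by simp
    have "(?c * om * ?c + ?s * (- (real \<alpha> * ?s ^ (2*\<alpha> - 1)) * om)) / om = ?c\<^sup>2 - real \<alpha> * ?s ^ (2*\<alpha>)"
      using om_pos s2 by (simp add: field_simps power2_eq_square)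
    also have "\<dots> = 1 - (real \<alpha> + 1) * ?s ^ (2*\<alpha>)" using id by (simp add: algebra_simps)
    finally have q: "1 - (?c * om * ?c + ?s * (- (real \<alpha> * ?s ^ (2*\<alpha> - 1)) * om)) / om = (real \<alpha> + 1) * ?s ^ (2*\<alpha>)"
      by simp
    have "x0 ^ (2*\<alpha>) / (real \<alpha> + 1) *
       (1 - (?c * om * ?c + ?s * (- (real \<alpha> * ?s ^ (2*\<alpha> - 1)) * om)) / om) = x0 ^ (2*\<alpha>) * ?s ^ (2*\<alpha>)"
      unfolding q by simp
    then show ?thesis by (simp add: Xs_pow)
  qed
  ultimately show ?thesis by (rule DERIV_eq)
qed

end

context hsys
begin

definition "Amp = root (2*\<beta>) (cc / w0\<^sup>2)"
definition "ka = \<bar>w0\<bar> * Amp ^ (\<beta> - 1)"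
definition "th0 = (SOME \<theta>. B.C \<theta> = v0 / (Amp * ka) \<and> B.S \<theta> = y0 / Amp)"
definition "yt s = (if w0 = 0 then y0 + v0 * s else Amp * B.S (ka * s + th0))"
definition "vt s = (if w0 = 0 then v0 else Amp * ka * B.C (ka * s + th0))"

lemma alg1: "1 \<le> b \<Longrightarrow> (A::real)\<^sup>2 * (\<bar>w\<bar> * A ^ (b - 1))\<^sup>2 = w\<^sup>2 * A ^ (2*b)"
proof -
  assume "1 \<le> b"
  then obtain m where m: "b = Suc m" by (cases b) auto
  have "A ^ (2*b) = A\<^sup>2 * A ^ (2*m)" unfolding m by (simp add: power_add[symmetric])
  moreover have "(\<bar>w\<bar> * A ^ (b - 1))\<^sup>2 = w\<^sup>2 * A ^ (2*m)"
    unfolding m by (simp add: power_mult_distrib power_mult[symmetric] mult.commute)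
  ultimately show ?thesis by simp
qed

lemma alg2: "1 \<le> b \<Longrightarrow> (A::real) * (\<bar>w\<bar> * A ^ (b - 1))\<^sup>2 = w\<^sup>2 * A ^ (2*b - 1)"
proof -
  assume "1 \<le> b"
  then obtain m where m: "b = Suc m" by (cases b) auto
  have "A ^ (2*b - 1) = A * A ^ (2*m)" unfolding m by simp
  moreover have "(\<bar>w\<bar> * A ^ (b - 1))\<^sup>2 = w\<^sup>2 * A ^ (2*m)"
    unfolding m by (simp add: power_mult_distrib power_mult[symmetric] mult.commute)
  ultimately show ?thesis by simp
qed

lemma bsuc: obtains m where "\<beta> = Suc m" using B.n1 by (cases \<beta>) auto

lemma Amp_pos: "w0 \<noteq> 0 \<Longrightarrow> 0 < Amp"
  unfolding Amp_def using cc_pos B.n1 by simp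

lemma Amp_pow: "w0 \<noteq> 0 \<Longrightarrow> Amp ^ (2*\<beta>) = cc / w0\<^sup>2"
  unfolding Amp_def using cc_pos B.n1 by (simp add: real_root_pow_pos2)

lemma ka_pos: "w0 \<noteq> 0 \<Longrightarrow> 0 < ka"
  unfolding ka_def using Amp_pos by simp

lemma Amp2ka2: "w0 \<noteq> 0 \<Longrightarrow> Amp\<^sup>2 * ka\<^sup>2 = cc"
proof -
  assume w: "w0 \<noteq> 0"
  have "Amp\<^sup>2 * ka\<^sup>2 = w0\<^sup>2 * Amp ^ (2*\<beta>)"
    unfolding ka_def by (rule alg1[OF B.n1])
  also have "\<dots> = cc" using Amp_pow[OF w] w by simp
  finally show ?thesis .
qed

lemma Amp_ka2: "w0 \<noteq> 0 \<Longrightarrow> Amp * ka\<^sup>2 = w0\<^sup>2 * Amp ^ (2*\<beta> - 1)"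
proof -
  assume w: "w0 \<noteq> 0"
  show ?thesis
    unfolding ka_def by (rule alg2[OF B.n1])
qed

lemma th0_prop: "w0 \<noteq> 0 \<Longrightarrow> B.C th0 = v0 / (Amp * ka) \<and> B.S th0 = y0 / Amp"
proof -
  assume w: "w0 \<noteq> 0"
  have "(v0 / (Amp * ka))\<^sup>2 + (y0 / Amp) ^ (2*\<beta>) = 1"
  proof -
    have "(v0 / (Amp * ka))\<^sup>2 = v0\<^sup>2 / cc" using Amp2ka2[OF w] by (simp add: power_divide power_mult_distrib)
    moreover have "(y0 / Amp) ^ (2*\<beta>) = y0 ^ (2*\<beta>) * w0\<^sup>2 / cc"
      using Amp_pow[OF w] w by (simp add: power_divide)
    moreover have "v0\<^sup>2 / cc + y0 ^ (2*\<beta>) * w0\<^sup>2 / cc = 1"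
    proof -
      have "v0\<^sup>2 / cc + y0 ^ (2*\<beta>) * w0\<^sup>2 / cc = (v0\<^sup>2 + y0 ^ (2*\<beta>) * w0\<^sup>2) / cc"
        by (simp add: add_divide_distrib)
      also have "\<dots> = 1" using cc_pos by (simp add: cc_def)
      finally show ?thesis .
    qed
    ultimately show ?thesis by simp
  qed
  then have "\<exists>\<theta>. B.C \<theta> = v0 / (Amp * ka) \<and> B.S \<theta> = y0 / Amp" by (rule B.SC_surj)
  then show ?thesis unfolding th0_def by (rule someI_ex)
qed

lemma energy: "(vt s)\<^sup>2 + yt s ^ (2*\<beta>) * w0\<^sup>2 = cc"
proof (cases "w0 = 0")
  case True then show ?thesis unfolding vt_def yt_def cc_def by simp
next
  case False
  let ?c = "B.C (ka * s + th0)" and ?s = "B.S (ka * s + th0)"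
  have "(vt s)\<^sup>2 + yt s ^ (2*\<beta>) * w0\<^sup>2 = (Amp\<^sup>2 * ka\<^sup>2) * ?c\<^sup>2 + (Amp ^ (2*\<beta>) * w0\<^sup>2) * ?s ^ (2*\<beta>)"
    using False by (simp add: vt_def yt_def power_mult_distrib)
  also have "\<dots> = cc * (?c\<^sup>2 + ?s ^ (2*\<beta>))" using Amp2ka2[OF False] Amp_pow[OF False] False
    by (simp add: algebra_simps)
  also have "\<dots> = cc" using B.SC_id by simp
  finally show ?thesis .
qed

lemma yt0: "yt 0 = y0"
  unfolding yt_def using th0_prop Amp_pos by (cases "w0 = 0") auto

lemma vt0: "vt 0 = v0"
  unfolding vt_def using th0_prop Amp_pos ka_pos by (cases "w0 = 0") auto

lemma yt_deriv: "(yt has_real_derivative vt s) (at s)"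
proof (cases "w0 = 0")
  case True
  then show ?thesis unfolding yt_def[abs_def] vt_def by (auto intro!: derivative_eq_intros)
next
  case False
  have "((\<lambda>s. ka * s + th0) has_real_derivative ka) (at s)" by (auto intro!: derivative_eq_intros)
  from DERIV_chain2[OF B.S_deriv this] have
    "((\<lambda>s. B.S (ka * s + th0)) has_real_derivative B.C (ka * s + th0) * ka) (at s)" .
  from DERIV_cmult[OF this, of Amp] show ?thesis
    using False unfolding yt_def[abs_def] vt_def by (simp add: mult_ac)
qed

lemma vt_deriv: "(vt has_real_derivative - (real \<beta> * yt s ^ (2*\<beta> - 1) * w0\<^sup>2)) (at s)"
proof (cases "w0 = 0")
  case True
  then show ?thesis unfolding yt_def vt_def[abs_def] by (auto intro!: derivative_eq_intros)
next
  case False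
  let ?s = "B.S (ka * s + th0)"
  have "((\<lambda>s. ka * s + th0) has_real_derivative ka) (at s)" by (auto intro!: derivative_eq_intros)
  from DERIV_chain2[OF B.C_deriv this] have
    "((\<lambda>s. B.C (ka * s + th0)) has_real_derivative - (real \<beta> * ?s ^ (2*\<beta> - 1)) * ka) (at s)" .
  from DERIV_cmult[OF this, of "Amp * ka"] have
    "(vt has_real_derivative Amp * ka * (- (real \<beta> * ?s ^ (2*\<beta> - 1)) * ka)) (at s)"
    using False unfolding vt_def[abs_def] by simp
  moreover have "Amp * ka * (- (real \<beta> * ?s ^ (2*\<beta> - 1)) * ka) = - (real \<beta> * yt s ^ (2*\<beta> - 1) * w0\<^sup>2)"
  proof -
    have "Amp * ka * (- (real \<beta> * ?s ^ (2*\<beta> - 1)) * ka) = - (real \<beta> * ?s ^ (2*\<beta> - 1) * (Amp * ka\<^sup>2))"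
      by (simp add: power2_eq_square mult_ac)
    also have "\<dots> = - (real \<beta> * ?s ^ (2*\<beta> - 1) * (w0\<^sup>2 * Amp ^ (2*\<beta> - 1)))" by (simp add: Amp_ka2[OF False])
    also have "\<dots> = - (real \<beta> * yt s ^ (2*\<beta> - 1) * w0\<^sup>2)"
      using False by (simp add: yt_def power_mult_distrib mult_ac)
    finally show ?thesis .
  qed
  ultimately show ?thesis by (rule DERIV_eq)
qed

definition "Ys t = yt (G t)"
definition "Vs t = vt (G t)"
definition "hZ t = Xs t ^ (2*\<alpha>) * Ys t ^ (2*\<beta>) * w0"
definition "Zs t = z0 + integral {-1..t} hZ - integral {-1..0} hZ"
definition "Ws (t::real) = w0"

lemma Xs_cont: "continuous_on A Xs"
  using Xs_deriv by (meson DERIV_isCont continuous_at_imp_continuous_on)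
lemma G_cont: "continuous_on A G"
  using G_deriv by (meson DERIV_isCont continuous_at_imp_continuous_on)
lemma Ys_deriv: "(Ys has_real_derivative Xs t ^ (2*\<alpha>) * Vs t) (at t)"
  unfolding Ys_def[abs_def] Vs_def using DERIV_chain2[OF yt_deriv G_deriv] by (simp add: mult_ac)
lemma Ys_cont: "continuous_on A Ys"
  using Ys_deriv by (meson DERIV_isCont continuous_at_imp_continuous_on)
lemma Vs_deriv: "(Vs has_real_derivative - (real \<beta> * Xs t ^ (2*\<alpha>) * Ys t ^ (2*\<beta> - 1) * (Ws t)\<^sup>2)) (at t)"
  unfolding Vs_def[abs_def] Ys_def Ws_def using DERIV_chain2[OF vt_deriv G_deriv] by (simp add: mult_ac)
lemma hZ_cont: "continuous_on A hZ"
  unfolding hZ_def[abs_def] by (intro continuous_intros Xs_cont Ys_cont)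

lemma int_deriv: "-1 < t \<Longrightarrow> ((\<lambda>x. integral {-1..x} hZ) has_real_derivative hZ t) (at t)"
proof -
  assume t: "-1 < t"
  have "((\<lambda>x. integral {-1..x} hZ) has_real_derivative hZ t) (at t within {-1..t+1})"
    by (rule integral_has_real_derivative[OF hZ_cont]) (use t in auto)
  moreover have "at t within {-1..t+1} = at t" by (rule at_within_Icc_at) (use t in auto)
  ultimately show ?thesis by simp
qed

lemma Zs_deriv: "0 \<le> t \<Longrightarrow> (Zs has_real_derivative Xs t ^ (2*\<alpha>) * Ys t ^ (2*\<beta>) * Ws t) (at t)"
proof -
  assume t: "0 \<le> t"
  have "(Zs has_real_derivative 0 + hZ t - 0) (at t)"
    unfolding Zs_def[abs_def] using int_deriv[of t] t by (intro DERIV_diff DERIV_add DERIV_const) auto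
  then show ?thesis by (simp add: hZ_def Ws_def)
qed

lemma Us_deriv': "(Us has_real_derivative - (real \<alpha> * Xs t ^ (2*\<alpha> - 1) * ((Vs t)\<^sup>2 + Ys t ^ (2*\<beta>) * (Ws t)\<^sup>2))) (at t)"
  using Us_deriv[of t] energy[of "G t"] by (simp add: Vs_def Ys_def Ws_def)

lemma exists_sol: "ham_sol \<alpha> \<beta> (x0, y0, z0) (0, v0, w0) Xs Ys Zs Us Vs Ws"
  unfolding ham_sol_def
proof (intro conjI allI impI)
  show "(Xs 0, Ys 0, Zs 0) = (x0, y0, z0)" by (simp add: Xs0 Ys_def G0 yt0 Zs_def)
  show "(Us 0, Vs 0, Ws 0) = (0, v0, w0)" by (simp add: Us0 Vs_def G0 vt0 Ws_def)
  fix t :: real assume t: "0 \<le> t"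
  show "(Xs has_real_derivative Us t) (at t within {0..})"
    using Xs_deriv by (rule has_field_derivative_at_within)
  show "(Ys has_real_derivative Xs t ^ (2*\<alpha>) * Vs t) (at t within {0..})"
    using Ys_deriv by (rule has_field_derivative_at_within)
  show "(Zs has_real_derivative Xs t ^ (2*\<alpha>) * Ys t ^ (2*\<beta>) * Ws t) (at t within {0..})"
    using Zs_deriv[OF t] by (rule has_field_derivative_at_within)
  show "(Us has_real_derivative - (real \<alpha> * Xs t ^ (2*\<alpha> - 1) * ((Vs t)\<^sup>2 + Ys t ^ (2*\<beta>) * (Ws t)\<^sup>2))) (at t within {0..})"
    using Us_deriv' by (rule has_field_derivative_at_within)
  show "(Vs has_real_derivative - (real \<beta> * Xs t ^ (2*\<alpha>) * Ys t ^ (2*\<beta> - 1) * (Ws t)\<^sup>2)) (at t within {0..})"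
    using Vs_deriv by (rule has_field_derivative_at_within)
  show "(Ws has_real_derivative 0) (at t within {0..})"
    unfolding Ws_def[abs_def] by (rule DERIV_const)
qed

end

context hsys
begin

lemma Xs_bound: "\<bar>Xs t\<bar> \<le> \<bar>x0\<bar>"
  using A.S_abs_le1[of "th t"] by (simp add: Xs_def abs_mult mult_left_le)

lemma uniq:
  assumes sol: "ham_sol \<alpha> \<beta> (x0, y0, z0) (0, v0, w0) X Y Z U V W" and t: "0 \<le> t"
  shows "X t = Xs t"
proof -
  have X0: "X 0 = x0" and Y0: "Y 0 = y0" and U0: "U 0 = 0" and V0: "V 0 = v0" and W0: "W 0 = w0"
    using sol by (auto simp: ham_sol_def)
  have dX: "\<And>t. 0 \<le> t \<Longrightarrow> (X has_real_derivative U t) (at t within {0..})"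
    and dY: "\<And>t. 0 \<le> t \<Longrightarrow> (Y has_real_derivative X t ^ (2 * \<alpha>) * V t) (at t within {0..})"
    and dU: "\<And>t. 0 \<le> t \<Longrightarrow> (U has_real_derivative
           - (real \<alpha> * X t ^ (2 * \<alpha> - 1) * ((V t)\<^sup>2 + Y t ^ (2 * \<beta>) * (W t)\<^sup>2))) (at t within {0..})"
    and dV: "\<And>t. 0 \<le> t \<Longrightarrow> (V has_real_derivative
           - (real \<beta> * X t ^ (2 * \<alpha>) * Y t ^ (2 * \<beta> - 1) * (W t)\<^sup>2)) (at t within {0..})"
    and dW: "\<And>t. 0 \<le> t \<Longrightarrow> (W has_real_derivative 0) (at t within {0..})"
    using sol unfolding ham_sol_def by auto
  have Wc: "W s = w0" if "0 \<le> s" for s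
  proof -
    have "\<exists>c. \<forall>x\<in>{0..}. W x = c"
      by (rule has_field_derivative_zero_constant) (use dW in auto)
    then obtain c where "\<forall>x\<in>{0..}. W x = c" by blast
    then show ?thesis using that W0 by force
  qed
  have Ec: "(V s)\<^sup>2 + Y s ^ (2 * \<beta>) * (W s)\<^sup>2 = cc" if "0 \<le> s" for s
  proof -
    have d: "((\<lambda>t. (V t)\<^sup>2 + Y t ^ (2 * \<beta>) * (W t)\<^sup>2) has_real_derivative 0) (at t within {0..})"
      if "0 \<le> t" for t
    proof -
      have e: "Y t * Y t ^ (2 * \<beta> - 1) = Y t ^ (2 * \<beta>)" using pow_split[OF B.n1, of "Y t"] by simp
      have "((\<lambda>t. (V t)\<^sup>2 + Y t ^ (2 * \<beta>) * (W t)\<^sup>2) has_real_derivative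
          2 * V t * (- (real \<beta> * X t ^ (2 * \<alpha>) * Y t ^ (2 * \<beta> - 1) * (W t)\<^sup>2)) +
          ((real (2 * \<beta>) * Y t ^ (2 * \<beta> - 1) * (X t ^ (2 * \<alpha>) * V t)) * (W t)\<^sup>2 +
           Y t ^ (2 * \<beta>) * (2 * W t * 0))) (at t within {0..})"
        using dV[OF that] dY[OF that] dW[OF that]
        by (auto intro!: derivative_eq_intros simp: power2_eq_square)
      moreover have "2 * V t * (- (real \<beta> * X t ^ (2 * \<alpha>) * Y t ^ (2 * \<beta> - 1) * (W t)\<^sup>2)) +
          ((real (2 * \<beta>) * Y t ^ (2 * \<beta> - 1) * (X t ^ (2 * \<alpha>) * V t)) * (W t)\<^sup>2 +
           Y t ^ (2 * \<beta>) * (2 * W t * 0)) = 0" by (simp add: algebra_simps)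
      ultimately show ?thesis by simp
    qed
    have "\<exists>c. \<forall>x\<in>{0..}. (V x)\<^sup>2 + Y x ^ (2 * \<beta>) * (W x)\<^sup>2 = c"
      by (rule has_field_derivative_zero_constant) (use d in auto)
    then obtain c where c: "\<forall>x\<in>{0..}. (V x)\<^sup>2 + Y x ^ (2 * \<beta>) * (W x)\<^sup>2 = c" by blast
    have "c = cc" using c[rule_format, of 0] V0 Y0 W0 by (simp add: cc_def)
    then show ?thesis using c that by auto
  qed
  have dU': "(U has_real_derivative - (real \<alpha> * cc * X s ^ (2 * \<alpha> - 1))) (at s within {0..})"
    if "0 \<le> s" for s
    using dU[OF that] Ec[OF that] by (simp add: mult_ac)
  have Fc: "(U s)\<^sup>2 + cc * X s ^ (2 * \<alpha>) = 1" if "0 \<le> s" for s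
  proof -
    have d: "((\<lambda>t. (U t)\<^sup>2 + cc * X t ^ (2 * \<alpha>)) has_real_derivative 0) (at t within {0..})"
      if "0 \<le> t" for t
    proof -
      have "((\<lambda>t. (U t)\<^sup>2 + cc * X t ^ (2 * \<alpha>)) has_real_derivative
          2 * U t * (- (real \<alpha> * cc * X t ^ (2 * \<alpha> - 1))) +
          cc * (real (2 * \<alpha>) * X t ^ (2 * \<alpha> - 1) * U t)) (at t within {0..})"
        using dU'[OF that] dX[OF that]
        by (auto intro!: derivative_eq_intros simp: power2_eq_square)
      moreover have "2 * U t * (- (real \<alpha> * cc * X t ^ (2 * \<alpha> - 1))) +
          cc * (real (2 * \<alpha>) * X t ^ (2 * \<alpha> - 1) * U t) = 0" by (simp add: algebra_simps)
      ultimately show ?thesis by simp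
    qed
    have "\<exists>c. \<forall>x\<in>{0..}. (U x)\<^sup>2 + cc * X x ^ (2 * \<alpha>) = c"
      by (rule has_field_derivative_zero_constant) (use d in auto)
    then obtain c where c: "\<forall>x\<in>{0..}. (U x)\<^sup>2 + cc * X x ^ (2 * \<alpha>) = c" by blast
    have "c = 1" using c[rule_format, of 0] U0 X0 cc_x0 by (simp add: mult.commute)
    then show ?thesis using c that by auto
  qed
  have Xb: "\<bar>X s\<bar> \<le> \<bar>x0\<bar>" if "0 \<le> s" for s
  proof -
    have "cc * X s ^ (2 * \<alpha>) \<le> cc * x0 ^ (2 * \<alpha>)"
      using Fc[OF that] cc_x0 by (simp add: mult.commute) (smt (verit) zero_le_power2)
    then have "X s ^ (2 * \<alpha>) \<le> x0 ^ (2 * \<alpha>)" using cc_pos by simp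
    then have le: "\<bar>X s\<bar> ^ (2 * \<alpha>) \<le> \<bar>x0\<bar> ^ (2 * \<alpha>)" by (simp add: power_even_abs)
    show ?thesis
    proof (rule ccontr)
      assume "\<not> \<bar>X s\<bar> \<le> \<bar>x0\<bar>"
      then have "\<bar>x0\<bar> ^ (2 * \<alpha>) < \<bar>X s\<bar> ^ (2 * \<alpha>)"
        using A.n1 by (intro power_strict_mono) auto
      then show False using le by simp
    qed
  qed
  show ?thesis
  proof (rule gronwall_uniq[where a="real \<alpha> * cc" and k="2 * \<alpha> - 1" and M="\<bar>x0\<bar>" and ua=U and ub=Us and xa=X and xb=Xs and T=t])
    show "\<And>t. 0 \<le> t \<Longrightarrow> (X has_real_derivative U t) (at t within {0..})" by (rule dX)
    show "\<And>t. 0 \<le> t \<Longrightarrow> (U has_real_derivative - (real \<alpha> * cc * X t ^ (2 * \<alpha> - 1))) (at t within {0..})"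
      by (rule dU')
    show "\<And>t. 0 \<le> t \<Longrightarrow> (Xs has_real_derivative Us t) (at t within {0..})"
      using Xs_deriv by (rule has_field_derivative_at_within)
    show "\<And>t. 0 \<le> t \<Longrightarrow> (Us has_real_derivative - (real \<alpha> * cc * Xs t ^ (2 * \<alpha> - 1))) (at t within {0..})"
      using Us_deriv by (simp add: mult_ac has_field_derivative_at_within)
    show "X 0 = Xs 0" "U 0 = Us 0" using X0 U0 by (simp_all add: Xs0 Us0)
    show "\<And>t. 0 \<le> t \<Longrightarrow> \<bar>X t\<bar> \<le> \<bar>x0\<bar>" by (rule Xb)
    show "\<And>t. 0 \<le> t \<Longrightarrow> \<bar>Xs t\<bar> \<le> \<bar>x0\<bar>" by (rule Xs_bound)
    show "0 \<le> real \<alpha> * cc" using cc_pos by simp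
  qed (rule t)
qed

lemma traj_eq: "0 \<le> t \<Longrightarrow> traj_x \<alpha> \<beta> (x0, y0, z0) (0, v0, w0) t = Xs t"
  unfolding traj_x_def
proof (rule the_equality)
  show "\<exists>X Y Z U V W. ham_sol \<alpha> \<beta> (x0, y0, z0) (0, v0, w0) X Y Z U V W \<and> X t = Xs t"
    using exists_sol by blast
  fix r assume "0 \<le> t" "\<exists>X Y Z U V W. ham_sol \<alpha> \<beta> (x0, y0, z0) (0, v0, w0) X Y Z U V W \<and> X t = r"
  then show "r = Xs t" using uniq by blast
qed

end

context hsys
begin

lemma int_eq: "0 \<le> t \<Longrightarrow> integral {0..t} (\<lambda>s. traj_x \<alpha> \<beta> (x0, y0, z0) (0, v0, w0) s ^ (2*\<alpha>)) = G t"
proof -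
  assume t: "0 \<le> t"
  have "integral {0..t} (\<lambda>s. traj_x \<alpha> \<beta> (x0, y0, z0) (0, v0, w0) s ^ (2*\<alpha>)) = integral {0..t} (\<lambda>s. Xs s ^ (2*\<alpha>))"
    by (rule integral_cong) (simp add: traj_eq)
  also have "\<dots> = G t - G 0"
  proof (rule integral_unique, rule fundamental_theorem_of_calculus[OF t])
    fix x assume "x \<in> {0..t}"
    show "(G has_vector_derivative Xs x ^ (2*\<alpha>)) (at x within {0..t})"
      using G_deriv[of x] has_field_derivative_at_within
      by (simp add: has_real_derivative_iff_has_vector_derivative[symmetric])
  qed
  finally show ?thesis by (simp add: G0)
qed

lemma omega1_eq: "omega1 \<alpha> \<beta> (x0, y0, z0) (0, v0, w0) = om"
proof -
  have "omega1 \<alpha> \<beta> (x0, y0, z0) (0, v0, w0) = cc powr (1 / (2 * real \<alpha>))" by (simp add: omega1_def cc_def)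
  also have "cc = om powr (real (2*\<alpha>))"
  proof -
    have "om powr (real (2*\<alpha>)) = om ^ (2*\<alpha>)" using om_pos by (rule powr_realpow)
    also have "\<dots> = 1 / \<bar>x0\<bar> ^ (2*\<alpha>)" by (simp add: om_def power_divide)
    also have "\<dots> = cc" by (simp add: cc_eq power_even_abs)
    finally show ?thesis by simp
  qed
  also have "(om powr (real (2*\<alpha>))) powr (1 / (2 * real \<alpha>)) = om"
    using A.n1 om_pos by (simp add: powr_powr)
  finally show ?thesis .
qed

definition "T1 = A.P * \<bar>x0\<bar>"

lemma T1_pos: "0 < T1" using A.P_pos x0 by (simp add: T1_def)

lemma tau1_eq: "tau1 \<alpha> \<beta> (x0, y0, z0) (0, v0, w0) = ereal T1"
  using om_pos by (simp add: tau1_def omega1_eq T1_def om_def)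

lemma G_mono: "t1 \<le> t2 \<Longrightarrow> G t1 \<le> G t2"
proof -
  assume h: "t1 \<le> t2"
  have "\<exists>y. (G has_real_derivative y) (at x) \<and> 0 \<le> y" for x
    using G_deriv[of x] by (intro exI[of _ "Xs x ^ (2*\<alpha>)"]) (simp add: zero_le_even_power)
  then show ?thesis by (rule DERIV_nonneg_imp_nondecreasing[OF h])
qed

lemma G_strict: "t1 < t2 \<Longrightarrow> G t1 < G t2"
proof (rule ccontr)
  assume lt: "t1 < t2" and "\<not> G t1 < G t2"
  then have eq: "G t2 = G t1" using G_mono[of t1 t2] by simp
  have Gc: "G s = G t1" if "t1 < s" "s < t2" for s
    using G_mono[of t1 s] G_mono[of s t2] that eq by simp
  have z: "A.S (th s) = 0" if "t1 < s" "s < t2" for s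
  proof -
    have "((\<lambda>_. G t1) has_real_derivative 0) (at s)" by simp
    then have "(G has_real_derivative 0) (at s)"
      by (rule has_field_derivative_transform_within_open[where S="{t1<..<t2}"]) (use that Gc in auto)
    then have "Xs s ^ (2*\<alpha>) = 0" using DERIV_unique G_deriv by blast
    then show ?thesis using x0 by (simp add: Xs_def)
  qed
  define m where "m = (t1 + t2) / 2"
  have m: "t1 < m" "m < t2" using lt by (auto simp: m_def)
  have "((\<lambda>_. 0) has_real_derivative 0) (at m)" by simp
  then have "((\<lambda>s. A.S (th s)) has_real_derivative 0) (at m)"
    by (rule has_field_derivative_transform_within_open[where S="{t1<..<t2}"]) (use m z in auto)
  then have "A.C (th m) * om = 0" using DERIV_unique SA_th_deriv by blast
  then have "A.C (th m) = 0" using om_pos by simp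
  moreover have "A.S (th m) = 0" using z m by simp
  ultimately show False using A.SC_id[of "th m"] by (simp add: A.zpow)
qed

lemma G_T1: "G T1 = x0 ^ (2*\<alpha>) * T1 / (real \<alpha> + 1)"
proof -
  have e: "th T1 = 3 * A.P / 2" using x0 by (simp add: th_def T1_def om_def field_simps)
  have "A.C (th T1) = 0" unfolding e by (rule A.C3P2)
  then show ?thesis by (simp add: G_def)
qed

definition "k2 = omega2 \<alpha> \<beta> (x0, y0, z0) (0, v0, w0)"
definition "Kc = k2 * G T1"

lemma k2_pos: "w0 \<noteq> 0 \<Longrightarrow> 0 < k2"
  using cc_pos by (simp add: k2_def omega2_def cc_def[symmetric])

lemma tau2_zero: "w0 = 0 \<Longrightarrow> tau2 \<alpha> \<beta> (x0, y0, z0) (0, v0, w0) = \<infinity>"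
  by (simp add: tau2_def)

lemma tau2_eq: "w0 \<noteq> 0 \<Longrightarrow> tau2 \<alpha> \<beta> (x0, y0, z0) (0, v0, w0) = Inf {ereal t | t. 0 < t \<and> k2 * G t = B.P}"
proof -
  assume w: "w0 \<noteq> 0"
  have "\<And>t. (0 < t \<and> k2 * integral {0..t} (\<lambda>s. traj_x \<alpha> \<beta> (x0, y0, z0) (0, v0, w0) s ^ (2*\<alpha>)) = B.P)
        \<longleftrightarrow> (0 < t \<and> k2 * G t = B.P)"
    using int_eq by auto
  then have "{ereal t | t. 0 < t \<and> k2 * integral {0..t} (\<lambda>s. traj_x \<alpha> \<beta> (x0, y0, z0) (0, v0, w0) s ^ (2*\<alpha>)) = B.P}
      = {ereal t | t. 0 < t \<and> k2 * G t = B.P}" by blast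
  then show ?thesis using w by (simp add: tau2_def k2_def)
qed

lemma tau2_char:
  assumes w: "w0 \<noteq> 0"
  shows "(ereal T1 \<le> tau2 \<alpha> \<beta> (x0, y0, z0) (0, v0, w0) \<longleftrightarrow> Kc \<le> B.P)
       \<and> (tau2 \<alpha> \<beta> (x0, y0, z0) (0, v0, w0) \<le> ereal T1 \<longleftrightarrow> B.P \<le> Kc)"
proof -
  define \<Sigma> where "\<Sigma> = {ereal t | t. 0 < t \<and> k2 * G t = B.P}"
  have t2: "tau2 \<alpha> \<beta> (x0, y0, z0) (0, v0, w0) = Inf \<Sigma>" using tau2_eq[OF w] by (simp add: \<Sigma>_def)
  have k: "0 < k2" using k2_pos[OF w] .
  have kG_strict: "t1 < t2 \<Longrightarrow> k2 * G t1 < k2 * G t2" for t1 t2 using G_strict k by simp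
  have kG_mono: "t1 \<le> t2 \<Longrightarrow> k2 * G t1 \<le> k2 * G t2" for t1 t2 using G_mono k by (simp add: mult_left_mono)
  have ivt: "\<exists>t. 0 < t \<and> t \<le> T1 \<and> k2 * G t = B.P" if "B.P \<le> Kc"
  proof -
    have "\<exists>t. 0 \<le> t \<and> t \<le> T1 \<and> k2 * G t = B.P"
      proof (rule IVT')
      show "k2 * G 0 \<le> B.P" using B.P_pos by (simp add: G0)
      show "B.P \<le> k2 * G T1" using that by (simp add: Kc_def)
      show "0 \<le> T1" using T1_pos by simp
      show "continuous_on {0..T1} (\<lambda>t. k2 * G t)" by (intro continuous_on_mult continuous_on_const G_cont)
    qed
    then obtain t where t: "0 \<le> t" "t \<le> T1" "k2 * G t = B.P" by blast
    then have "t \<noteq> 0" using B.P_pos by (auto simp: G0)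
    then have "0 < t" using t by simp
    then show ?thesis using t by blast
  qed
  have A1: "ereal T1 \<le> Inf \<Sigma>" if "Kc \<le> B.P"
  proof (rule Inf_greatest)
    fix x assume "x \<in> \<Sigma>"
    then obtain t where t: "x = ereal t" "0 < t" "k2 * G t = B.P" by (auto simp: \<Sigma>_def)
    have "T1 \<le> t"
    proof (rule ccontr)
      assume "\<not> T1 \<le> t"
      then have "k2 * G t < Kc" using kG_strict[of t T1] by (simp add: Kc_def)
      then show False using t that by simp
    qed
    then show "ereal T1 \<le> x" using t by simp
  qed
  have A2: "Inf \<Sigma> \<le> ereal T1" if h2: "B.P \<le> Kc"
  proof -
    obtain t where t: "0 < t" "t \<le> T1" "k2 * G t = B.P" using ivt[OF h2] by blast
    then have "ereal t \<in> \<Sigma>" by (auto simp: \<Sigma>_def)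
    then have "Inf \<Sigma> \<le> ereal t" by (rule Inf_lower)
    then show ?thesis using t by (meson ereal_less_eq(3) order_trans)
  qed
  have A3: "\<not> Inf \<Sigma> \<le> ereal T1" if "Kc < B.P"
  proof
    assume le: "Inf \<Sigma> \<le> ereal T1"
    have gt: "T1 < t" if "ereal t \<in> \<Sigma>" for t
    proof (rule ccontr)
      assume "\<not> T1 < t"
      then have "k2 * G t \<le> Kc" using kG_mono[of t T1] by (simp add: Kc_def)
      moreover have "k2 * G t = B.P" using that by (auto simp: \<Sigma>_def)
      ultimately show False using \<open>Kc < B.P\<close> by simp
    qed
    show False
    proof (cases "\<Sigma> = {}")
      case True
      then have "Inf \<Sigma> = \<infinity>" by (simp add: top_ereal_def)
      then show False using le by simp
    next
      case False
      then obtain x where "x \<in> \<Sigma>" by blast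
      then obtain t where t: "x = ereal t" "0 < t" "k2 * G t = B.P" by (auto simp: \<Sigma>_def)
      have "\<Sigma> = {ereal t}"
      proof
        show "{ereal t} \<subseteq> \<Sigma>" using t \<open>x \<in> \<Sigma>\<close> by simp
        show "\<Sigma> \<subseteq> {ereal t}"
        proof
          fix y assume "y \<in> \<Sigma>"
          then obtain s where s: "y = ereal s" "0 < s" "k2 * G s = B.P" by (auto simp: \<Sigma>_def)
          have "s = t"
            using kG_strict[of s t] kG_strict[of t s] s t by (metis less_irrefl linorder_neqE_linordered_idom)
          then show "y \<in> {ereal t}" using s by simp
        qed
      qed
      then have "Inf \<Sigma> = ereal t" by simp
      moreover have "T1 < t" using gt \<open>x \<in> \<Sigma>\<close> t by simp
      ultimately show False using le by simp
    qed
  qed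
  have A4: "\<not> ereal T1 \<le> Inf \<Sigma>" if h4: "B.P < Kc"
  proof
    assume le: "ereal T1 \<le> Inf \<Sigma>"
    obtain t where t: "0 < t" "t \<le> T1" "k2 * G t = B.P" using ivt h4 by force
    then have "t \<noteq> T1" using h4 by (auto simp: Kc_def)
    then have "t < T1" using t by simp
    have "ereal t \<in> \<Sigma>" using t by (auto simp: \<Sigma>_def)
    then have "Inf \<Sigma> \<le> ereal t" by (rule Inf_lower)
    then show False using le \<open>t < T1\<close> by (meson ereal_less_eq(3) not_le order_trans)
  qed
  show ?thesis unfolding t2 using A1 A2 A3 A4 by (meson not_le)
qed

end

context gtrig
begin

lemma S_mono_base: "0 \<le> a \<Longrightarrow> a \<le> b \<Longrightarrow> b \<le> P/2 \<Longrightarrow> S a \<le> S b"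
  using S_strict_base[of a b] by (cases "a = b") auto

lemma S_abs_half: "0 \<le> s \<Longrightarrow> s \<le> P/2 \<Longrightarrow> \<bar>S s\<bar> = S s"
  using S_le1_base by auto

lemma S_shiftP': "S (s - P) = - S s"
  using S_shiftP[of "s - P"] by simp

lemma S_m2P: "S (s - 2 * P) = S s"
  using S_period[of s "-1"] by simp

lemma arcA:
  assumes d: "0 \<le> d" "d \<le> P/2" and phi: "0 \<le> \<phi>" "\<phi> < 2 * P"
    and c: "\<phi> \<le> d \<or> \<bar>\<phi> - P\<bar> \<le> d \<or> 2 * P - \<phi> \<le> d"
  shows "\<bar>S \<phi>\<bar> \<le> S d"
proof -
  consider "\<phi> \<le> d" | "\<bar>\<phi> - P\<bar> \<le> d" "\<phi> \<le> P" | "\<bar>\<phi> - P\<bar> \<le> d" "P \<le> \<phi>" | "2 * P - \<phi> \<le> d"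
    using c by linarith
  then show ?thesis
  proof cases
    case 1 then show ?thesis using S_abs_half[of \<phi>] S_mono_base[of \<phi> d] phi d by auto
  next
    case 2
    then have "S \<phi> = S (P - \<phi>)" by (simp add: S_sym)
    moreover have "0 \<le> P - \<phi>" "P - \<phi> \<le> d" using 2 by auto
    ultimately show ?thesis using S_abs_half[of "P - \<phi>"] S_mono_base[of "P - \<phi>" d] d by auto
  next
    case 3
    then have "S \<phi> = - S (\<phi> - P)" using S_shiftP'[of \<phi>] by simp
    moreover have "0 \<le> \<phi> - P" "\<phi> - P \<le> d" using 3 by auto
    ultimately show ?thesis using S_abs_half[of "\<phi> - P"] S_mono_base[of "\<phi> - P" d] d by auto
  next
    case 4
    have "S \<phi> = S (\<phi> - 2 * P)" by (simp add: S_m2P)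
    also have "\<dots> = - S (2 * P - \<phi>)" using S_odd[of "2 * P - \<phi>"] by simp
    finally have "S \<phi> = - S (2 * P - \<phi>)" .
    moreover have "0 \<le> 2 * P - \<phi>" "2 * P - \<phi> \<le> d" using 4 phi by auto
    ultimately show ?thesis using S_abs_half[of "2 * P - \<phi>"] S_mono_base[of "2 * P - \<phi>" d] d by auto
  qed
qed

lemma arcB0:
  assumes d: "0 \<le> d" "d \<le> P/2" and c: "d \<le> \<phi>" "\<phi> \<le> P - d"
  shows "S d \<le> \<bar>S \<phi>\<bar>"
proof (cases "\<phi> \<le> P/2")
  case True then show ?thesis using S_abs_half[of \<phi>] S_mono_base[of d \<phi>] d c by auto
next
  case False
  then have "S \<phi> = S (P - \<phi>)" by (simp add: S_sym)
  moreover have "d \<le> P - \<phi>" "P - \<phi> \<le> P/2" using c False by auto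
  ultimately show ?thesis using S_abs_half[of "P - \<phi>"] S_mono_base[of d "P - \<phi>"] d by auto
qed

lemma arcB:
  assumes d: "0 \<le> d" "d \<le> P/2"
    and c: "d \<le> \<phi> \<and> \<phi> \<le> P - d \<or> P + d \<le> \<phi> \<and> \<phi> \<le> 2 * P - d"
  shows "S d \<le> \<bar>S \<phi>\<bar>"
proof (cases "d \<le> \<phi> \<and> \<phi> \<le> P - d")
  case True then show ?thesis using arcB0 d by auto
next
  case False
  then have "d \<le> \<phi> - P" "\<phi> - P \<le> P - d" using c by auto
  then have "S d \<le> \<bar>S (\<phi> - P)\<bar>" using arcB0 d by auto
  then show ?thesis using S_shiftP'[of \<phi>] by simp
qed

end

context hsys
begin

lemma tau_summary:
  "(tau1 \<alpha> \<beta> (x0, y0, z0) (0, v0, w0) \<le> tau2 \<alpha> \<beta> (x0, y0, z0) (0, v0, w0) \<longleftrightarrow> (w0 = 0 \<or> Kc \<le> B.P))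
   \<and> (tau2 \<alpha> \<beta> (x0, y0, z0) (0, v0, w0) \<le> tau1 \<alpha> \<beta> (x0, y0, z0) (0, v0, w0) \<longleftrightarrow> (w0 \<noteq> 0 \<and> B.P \<le> Kc))"
proof (cases "w0 = 0")
  case True
  have a: "tau2 \<alpha> \<beta> (x0, y0, z0) (0, v0, w0) = \<infinity>" by (rule tau2_zero[OF True])
  show ?thesis unfolding a tau1_eq using True by simp
next
  case False then show ?thesis using tau2_char[OF False] by (simp add: tau1_eq)
qed

lemma Kc_formula:
  assumes w: "w0 \<noteq> 0"
  shows "Kc = (\<bar>w0\<bar> * \<bar>y0\<bar> ^ \<beta> * \<bar>x0\<bar> ^ \<alpha>) powr (1 / real \<beta>) *
              (A.P * \<bar>x0\<bar> ^ (\<alpha> + 1) / ((real \<alpha> + 1) * \<bar>y0\<bar>))"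
proof -
  define a where "a = \<bar>x0\<bar>"
  have a: "0 < a" using x0 by (simp add: a_def)
  have b: "0 < real \<beta>" using B.n1 by simp
  have ccp: "cc = a powr (- real (2*\<alpha>))"
  proof -
    have "cc = 1 / a ^ (2*\<alpha>)" by (simp add: cc_eq a_def power_even_abs)
    also have "\<dots> = 1 / a powr (real (2*\<alpha>))" using powr_realpow[OF a, of "2*\<alpha>"] by simp
    also have "\<dots> = a powr (- real (2*\<alpha>))" by (simp add: powr_minus_divide)
    finally show ?thesis .
  qed
  have c1: "cc powr ((real \<beta> - 1) / (2 * real \<beta>)) = a powr (real \<alpha> / real \<beta> - real \<alpha>)"
  proof -
    have "cc powr ((real \<beta> - 1) / (2 * real \<beta>)) = a powr (- real (2*\<alpha>) * ((real \<beta> - 1) / (2 * real \<beta>)))"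
      by (simp add: ccp powr_powr)
    also have "- real (2*\<alpha>) * ((real \<beta> - 1) / (2 * real \<beta>)) = real \<alpha> / real \<beta> - real \<alpha>"
      using b by (simp add: field_simps)
    finally show ?thesis .
  qed
  have k2e: "k2 = \<bar>w0\<bar> powr (1 / real \<beta>) * a powr (real \<alpha> / real \<beta> - real \<alpha>)"
    by (simp add: k2_def omega2_def cc_def[symmetric] c1)
  have x2: "x0 ^ (2*\<alpha>) = a powr (real (2*\<alpha>))"
    using powr_realpow[OF a, of "2*\<alpha>"] by (simp add: a_def power_even_abs)
  have GT: "G T1 = a powr (real (2*\<alpha>) + 1) * A.P / (real \<alpha> + 1)"
  proof -
    have "G T1 = x0 ^ (2*\<alpha>) * T1 / (real \<alpha> + 1)" by (rule G_T1)
    also have "\<dots> = a powr (real (2*\<alpha>)) * (A.P * a) / (real \<alpha> + 1)" by (simp only: x2 T1_def a_def)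
    also have "\<dots> = a powr (real (2*\<alpha>) + 1) * A.P / (real \<alpha> + 1)" using a by (simp add: powr_add mult_ac)
    finally show ?thesis .
  qed
  have L: "Kc = \<bar>w0\<bar> powr (1 / real \<beta>) * a powr (real \<alpha> / real \<beta> + real \<alpha> + 1) * A.P / (real \<alpha> + 1)"
  proof -
    have "Kc = \<bar>w0\<bar> powr (1 / real \<beta>) * (a powr (real \<alpha> / real \<beta> - real \<alpha>) * a powr (real (2*\<alpha>) + 1)) * A.P / (real \<alpha> + 1)"
      by (simp add: Kc_def k2e GT mult_ac)
    also have "a powr (real \<alpha> / real \<beta> - real \<alpha>) * a powr (real (2*\<alpha>) + 1) = a powr (real \<alpha> / real \<beta> + real \<alpha> + 1)"
    proof -
      have "(real \<alpha> / real \<beta> - real \<alpha>) + (real (2*\<alpha>) + 1) = real \<alpha> / real \<beta> + real \<alpha> + 1" by simp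
      then show ?thesis by (metis powr_add)
    qed
    finally show ?thesis .
  qed
  have R1: "(\<bar>w0\<bar> * \<bar>y0\<bar> ^ \<beta> * a ^ \<alpha>) powr (1 / real \<beta>) = \<bar>w0\<bar> powr (1 / real \<beta>) * \<bar>y0\<bar> * a powr (real \<alpha> / real \<beta>)"
  proof -
    have "(\<bar>w0\<bar> * \<bar>y0\<bar> ^ \<beta> * a ^ \<alpha>) powr (1 / real \<beta>) =
          \<bar>w0\<bar> powr (1 / real \<beta>) * (\<bar>y0\<bar> ^ \<beta>) powr (1 / real \<beta>) * (a ^ \<alpha>) powr (1 / real \<beta>)"
      using a by (simp add: powr_mult)
    also have "(\<bar>y0\<bar> ^ \<beta>) powr (1 / real \<beta>) = \<bar>y0\<bar>"
      using y0 b by (simp add: powr_realpow[symmetric] powr_powr)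
    also have "(a ^ \<alpha>) powr (1 / real \<beta>) = a powr (real \<alpha> / real \<beta>)"
      using a by (simp add: powr_realpow[symmetric] powr_powr)
    finally show ?thesis .
  qed
  have R2: "a ^ (\<alpha> + 1) = a powr (real \<alpha> + 1)" using powr_realpow[OF a, of "\<alpha> + 1"] by (simp add: add.commute)
  have "(\<bar>w0\<bar> * \<bar>y0\<bar> ^ \<beta> * a ^ \<alpha>) powr (1 / real \<beta>) * (A.P * a ^ (\<alpha> + 1) / ((real \<alpha> + 1) * \<bar>y0\<bar>))
     = \<bar>w0\<bar> powr (1 / real \<beta>) * (a powr (real \<alpha> / real \<beta>) * a powr (real \<alpha> + 1)) * A.P / (real \<alpha> + 1)"
  proof -
    have gen: "Y \<noteq> 0 \<Longrightarrow> c \<noteq> 0 \<Longrightarrow> (W * Y * E1) * (Pp * E2 / (c * Y)) = W * (E1 * E2) * Pp / c"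
      for W Y E1 E2 Pp c :: real by (simp add: field_simps)
    show ?thesis unfolding R1 R2 by (rule gen) (use y0 in auto)
  qed
  also have "a powr (real \<alpha> / real \<beta>) * a powr (real \<alpha> + 1) = a powr (real \<alpha> / real \<beta> + real \<alpha> + 1)"
    by (simp add: powr_add[symmetric] add.assoc)
  finally show ?thesis using L by (simp add: a_def)
qed

lemma rho_le1: "\<bar>w0\<bar> * \<bar>y0\<bar> ^ \<beta> * \<bar>x0\<bar> ^ \<alpha> \<le> 1"
proof -
  have "(\<bar>w0\<bar> * \<bar>y0\<bar> ^ \<beta> * \<bar>x0\<bar> ^ \<alpha>)\<^sup>2 = x0 ^ (2*\<alpha>) * (y0 ^ (2*\<beta>) * w0\<^sup>2)"
    by (simp add: power_mult_distrib power_even_abs power_mult[symmetric] mult_ac)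
  also have "\<dots> \<le> x0 ^ (2*\<alpha>) * (v0\<^sup>2 + y0 ^ (2*\<beta>) * w0\<^sup>2)" using x0p by (intro mult_left_mono) auto
  also have "\<dots> = 1" by (rule ham)
  finally have "(\<bar>w0\<bar> * \<bar>y0\<bar> ^ \<beta> * \<bar>x0\<bar> ^ \<alpha>)\<^sup>2 \<le> 1" .
  then show ?thesis by (simp add: power_le_one_iff abs_square_le_1)
qed

end

definition Km :: "nat \<Rightarrow> real \<Rightarrow> real \<Rightarrow> real" where
  "Km \<alpha> x0 y0 = pi_gen (real \<alpha>) * \<bar>x0\<bar> ^ (\<alpha> + 1) / ((real \<alpha> + 1) * \<bar>y0\<bar>)"

lemma summary:
  fixes \<alpha> \<beta> :: nat and x0 y0 z0 v0 w0 :: real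
  assumes a: "1 \<le> \<alpha>" and b: "1 \<le> \<beta>" and x0: "x0 \<noteq> 0" and y0: "y0 \<noteq> 0"
    and H: "Ham \<alpha> \<beta> (x0, y0, z0) (0, v0, w0) = 1/2"
  shows "(tau1 \<alpha> \<beta> (x0, y0, z0) (0, v0, w0) \<le> tau2 \<alpha> \<beta> (x0, y0, z0) (0, v0, w0) \<longleftrightarrow>
            (w0 = 0 \<or> (\<bar>w0\<bar> * \<bar>y0\<bar> ^ \<beta> * \<bar>x0\<bar> ^ \<alpha>) powr (1 / real \<beta>) * Km \<alpha> x0 y0 \<le> pi_gen (real \<beta>)))
       \<and> (tau2 \<alpha> \<beta> (x0, y0, z0) (0, v0, w0) \<le> tau1 \<alpha> \<beta> (x0, y0, z0) (0, v0, w0) \<longleftrightarrow>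
            (w0 \<noteq> 0 \<and> pi_gen (real \<beta>) \<le> (\<bar>w0\<bar> * \<bar>y0\<bar> ^ \<beta> * \<bar>x0\<bar> ^ \<alpha>) powr (1 / real \<beta>) * Km \<alpha> x0 y0))
       \<and> \<bar>w0\<bar> * \<bar>y0\<bar> ^ \<beta> * \<bar>x0\<bar> ^ \<alpha> \<le> 1"
proof -
  have ham: "x0 ^ (2*\<alpha>) * (v0\<^sup>2 + y0 ^ (2*\<beta>) * w0\<^sup>2) = 1"
    using H by (simp add: Ham_def algebra_simps)
  interpret Hs: hsys \<alpha> \<beta> x0 y0 z0 v0 w0
    by unfold_locales (use a b x0 y0 ham in auto)
  have S: ?thesis if "w0 = 0"
    using Hs.tau_summary Hs.rho_le1 that by simp
  have T: ?thesis if w: "w0 \<noteq> 0"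
    using Hs.tau_summary Hs.rho_le1 Hs.Kc_formula[OF w] w by (simp add: Km_def)
  show ?thesis using S T by blast
qed

lemma rho_abs: "1 \<le> k \<Longrightarrow> \<bar>rho (real k) s\<bar> = \<bar>s\<bar> ^ k"
proof -
  assume k: "1 \<le> k"
  show ?thesis
  proof (cases "s = 0")
    case True then show ?thesis using k by (simp add: rho_def)
  next
    case False
    have "\<bar>s\<bar> powr (real k - 1) = \<bar>s\<bar> ^ (k - 1)"
      using powr_realpow[of "\<bar>s\<bar>" "k - 1"] False k by (simp add: of_nat_diff)
    then have "\<bar>rho (real k) s\<bar> = \<bar>s\<bar> ^ (k - 1) * \<bar>s\<bar>" by (simp add: rho_def abs_mult)
    also have "\<dots> = \<bar>s\<bar> ^ k" using k by (simp add: power_Suc2[symmetric])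
    finally show ?thesis .
  qed
qed

lemma rho_sq: "1 \<le> k \<Longrightarrow> (rho (real k) s)\<^sup>2 = s ^ (2*k)"
proof -
  assume k: "1 \<le> k"
  have "(rho (real k) s)\<^sup>2 = \<bar>rho (real k) s\<bar>\<^sup>2" by simp
  also have "\<dots> = (\<bar>s\<bar> ^ k)\<^sup>2" by (simp add: rho_abs[OF k])
  also have "\<dots> = s ^ (2*k)" by (simp add: power_mult[symmetric] power_even_abs mult.commute)
  finally show ?thesis .
qed

lemma rho_zero: "1 \<le> k \<Longrightarrow> rho (real k) s = 0 \<longleftrightarrow> s = 0"
proof -
  assume k: "1 \<le> k"
  have "rho (real k) s = 0 \<longleftrightarrow> \<bar>rho (real k) s\<bar> = 0" by simp
  also have "\<dots> \<longleftrightarrow> \<bar>s\<bar> ^ k = 0" by (simp only: rho_abs[OF k])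
  also have "\<dots> \<longleftrightarrow> s = 0" using k by simp
  finally show ?thesis .
qed

lemma sph_props:
  fixes \<alpha> \<beta> :: nat and x0 y0 z0 \<phi> :: real
  assumes a: "1 \<le> \<alpha>" and b: "1 \<le> \<beta>" and x0: "x0 \<noteq> 0" and y0: "y0 \<noteq> 0"
  obtains v w where "sph \<alpha> \<beta> (x0, y0, z0) (pi_gen (real \<alpha>) / 2) \<phi> = (0, v, w)"
    "Ham \<alpha> \<beta> (x0, y0, z0) (0, v, w) = 1/2"
    "(\<bar>w\<bar> * \<bar>y0\<bar> ^ \<beta> * \<bar>x0\<bar> ^ \<alpha>) powr (1 / real \<beta>) = \<bar>sin_gen (real \<beta>) \<phi>\<bar>"
    "w = 0 \<longleftrightarrow> sin_gen (real \<beta>) \<phi> = 0"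
proof -
  interpret A: gtrig \<alpha> by unfold_locales (rule a)
  interpret B: gtrig \<beta> by unfold_locales (rule b)
  define r where "r = rho (real \<alpha>) (1 / x0)"
  define v where "v = B.C \<phi> * r"
  define w where "w = r * rho (real \<beta>) (B.S \<phi> / y0)"
  have e: "sph \<alpha> \<beta> (x0, y0, z0) (pi_gen (real \<alpha>) / 2) \<phi> = (0, v, w)"
    by (simp add: sph_def A.SP2 A.CP2 v_def w_def r_def)
  have r2: "x0 ^ (2*\<alpha>) * r\<^sup>2 = 1"
    using x0 by (simp add: r_def rho_sq[OF a] power_divide)
  have w2: "y0 ^ (2*\<beta>) * (rho (real \<beta>) (B.S \<phi> / y0))\<^sup>2 = B.S \<phi> ^ (2*\<beta>)"
    using y0 by (simp add: rho_sq[OF b] power_divide)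
  have "Ham \<alpha> \<beta> (x0, y0, z0) (0, v, w) = ((B.C \<phi>)\<^sup>2 * (x0 ^ (2*\<alpha>) * r\<^sup>2) +
        (x0 ^ (2*\<alpha>) * r\<^sup>2) * (y0 ^ (2*\<beta>) * (rho (real \<beta>) (B.S \<phi> / y0))\<^sup>2)) / 2"
    by (simp add: Ham_def v_def w_def power_mult_distrib mult_ac)
  also have "\<dots> = 1/2" using B.SC_id[of \<phi>] by (simp add: r2 w2)
  finally have h: "Ham \<alpha> \<beta> (x0, y0, z0) (0, v, w) = 1/2" .
  have rr: "\<bar>w\<bar> * \<bar>y0\<bar> ^ \<beta> * \<bar>x0\<bar> ^ \<alpha> = \<bar>B.S \<phi>\<bar> ^ \<beta>"
  proof -
    have "\<bar>w\<bar> * \<bar>y0\<bar> ^ \<beta> * \<bar>x0\<bar> ^ \<alpha> = (\<bar>1 / x0\<bar> ^ \<alpha> * \<bar>x0\<bar> ^ \<alpha>) * (\<bar>B.S \<phi> / y0\<bar> ^ \<beta> * \<bar>y0\<bar> ^ \<beta>)"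
      by (simp add: w_def r_def abs_mult rho_abs[OF a] rho_abs[OF b] mult_ac)
    also have "\<dots> = \<bar>B.S \<phi>\<bar> ^ \<beta>"
    proof -
      have "\<bar>1 / x0\<bar> ^ \<alpha> * \<bar>x0\<bar> ^ \<alpha> = 1" using x0 by (simp add: power_mult_distrib[symmetric] abs_mult[symmetric])
      moreover have "\<bar>B.S \<phi> / y0\<bar> ^ \<beta> * \<bar>y0\<bar> ^ \<beta> = \<bar>B.S \<phi>\<bar> ^ \<beta>"
      proof -
        have "\<bar>B.S \<phi> / y0\<bar> * \<bar>y0\<bar> = \<bar>B.S \<phi>\<bar>" using y0 by (simp add: abs_divide)
        then show ?thesis by (metis power_mult_distrib)
      qed
      ultimately show ?thesis by simp
    qed
    finally show ?thesis .
  qed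
  have rp: "(\<bar>w\<bar> * \<bar>y0\<bar> ^ \<beta> * \<bar>x0\<bar> ^ \<alpha>) powr (1 / real \<beta>) = \<bar>B.S \<phi>\<bar>"
  proof (cases "B.S \<phi> = 0")
    case True then show ?thesis using b by (simp add: rr)
  next
    case False
    then have "(\<bar>B.S \<phi>\<bar> ^ \<beta>) powr (1 / real \<beta>) = \<bar>B.S \<phi>\<bar>"
      using b by (simp add: powr_realpow[symmetric] powr_powr)
    then show ?thesis by (simp add: rr)
  qed
  have wz: "w = 0 \<longleftrightarrow> B.S \<phi> = 0"
  proof -
    have "r \<noteq> 0" using x0 rho_zero[OF a, of "1/x0"] by (simp add: r_def)
    then show ?thesis using rho_zero[OF b, of "B.S \<phi> / y0"] y0 by (simp add: w_def)
  qed
  show ?thesis using that e h rp wz by blast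
qed

theorem mainTheorem12:
  fixes \<alpha> \<beta> :: nat and x0 y0 z0 :: real
  assumes "\<alpha> \<ge> 1" and "\<beta> \<ge> 1" and "x0 \<noteq> 0" and "y0 \<noteq> 0"
  shows "((\<forall>u0 v0 w0. Ham \<alpha> \<beta> (x0, y0, z0) (u0, v0, w0) = 1/2 \<and> u0 = 0 \<longrightarrow>
             tau1 \<alpha> \<beta> (x0, y0, z0) (u0, v0, w0) \<le> tau2 \<alpha> \<beta> (x0, y0, z0) (u0, v0, w0))
         \<longleftrightarrow> \<bar>y0\<bar> \<ge> pi_gen (real \<alpha>) * \<bar>x0\<bar> ^ (\<alpha> + 1) / (pi_gen (real \<beta>) * (real \<alpha> + 1)))
      \<and> ({(u0, v0, w0). Ham \<alpha> \<beta> (x0, y0, z0) (u0, v0, w0) = 1/2 \<and> u0 = 0 \<and>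
             tau2 \<alpha> \<beta> (x0, y0, z0) (u0, v0, w0) \<le> tau1 \<alpha> \<beta> (x0, y0, z0) (u0, v0, w0)} \<noteq> {}
         \<longrightarrow> (\<exists>\<delta>. 0 < \<delta> \<and> \<delta> \<le> pi_gen (real \<beta>) / 2 \<and>
               (\<forall>\<phi>2. 0 \<le> \<phi>2 \<and> \<phi>2 < 2 * pi_gen (real \<beta>) \<longrightarrow>
                  (let l = sph \<alpha> \<beta> (x0, y0, z0) (pi_gen (real \<alpha>) / 2) \<phi>2;
                       P = pi_gen (real \<beta>) in
                   ((\<phi>2 \<le> \<delta> \<or> \<bar>\<phi>2 - P\<bar> \<le> \<delta> \<or> 2 * P - \<phi>2 \<le> \<delta>) \<longrightarrow>
                      tau1 \<alpha> \<beta> (x0, y0, z0) l \<le> tau2 \<alpha> \<beta> (x0, y0, z0) l) \<and>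
                   ((\<delta> \<le> \<phi>2 \<and> \<phi>2 \<le> P - \<delta> \<or> P + \<delta> \<le> \<phi>2 \<and> \<phi>2 \<le> 2 * P - \<delta>) \<longrightarrow>
                      tau2 \<alpha> \<beta> (x0, y0, z0) l \<le> tau1 \<alpha> \<beta> (x0, y0, z0) l)))))"
proof -
  note a = assms(1) and b = assms(2) and x0 = assms(3) and y0 = assms(4)
  interpret A: gtrig \<alpha> by unfold_locales (rule a)
  interpret B: gtrig \<beta> by unfold_locales (rule b)
  define K where "K = Km \<alpha> x0 y0"
  have Kpos: "0 < K" using A.P_pos x0 y0 by (simp add: K_def Km_def)
  have cond: "(\<bar>y0\<bar> \<ge> A.P * \<bar>x0\<bar> ^ (\<alpha> + 1) / (B.P * (real \<alpha> + 1))) \<longleftrightarrow> K \<le> B.P"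
  proof -
    have p: "0 < B.P * (real \<alpha> + 1)" "0 < (real \<alpha> + 1) * \<bar>y0\<bar>" using B.P_pos y0 by auto
    have "(\<bar>y0\<bar> \<ge> A.P * \<bar>x0\<bar> ^ (\<alpha> + 1) / (B.P * (real \<alpha> + 1))) \<longleftrightarrow>
          A.P * \<bar>x0\<bar> ^ (\<alpha> + 1) \<le> \<bar>y0\<bar> * (B.P * (real \<alpha> + 1))"
      using p(1) by (simp add: divide_le_eq)
    also have "\<dots> \<longleftrightarrow> A.P * \<bar>x0\<bar> ^ (\<alpha> + 1) \<le> B.P * ((real \<alpha> + 1) * \<bar>y0\<bar>)" by (simp add: mult_ac)
    also have "\<dots> \<longleftrightarrow> K \<le> B.P" using p(2) by (simp add: K_def Km_def divide_le_eq)
    finally show ?thesis .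
  qed
  have part1: "(\<forall>u0 v0 w0. Ham \<alpha> \<beta> (x0, y0, z0) (u0, v0, w0) = 1/2 \<and> u0 = 0 \<longrightarrow>
             tau1 \<alpha> \<beta> (x0, y0, z0) (u0, v0, w0) \<le> tau2 \<alpha> \<beta> (x0, y0, z0) (u0, v0, w0)) \<longleftrightarrow> K \<le> B.P"
  proof
    assume H: "\<forall>u0 v0 w0. Ham \<alpha> \<beta> (x0, y0, z0) (u0, v0, w0) = 1/2 \<and> u0 = 0 \<longrightarrow>
             tau1 \<alpha> \<beta> (x0, y0, z0) (u0, v0, w0) \<le> tau2 \<alpha> \<beta> (x0, y0, z0) (u0, v0, w0)"
    define ws where "ws = 1 / (\<bar>y0\<bar> ^ \<beta> * \<bar>x0\<bar> ^ \<alpha>)"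
    have ws0: "ws \<noteq> 0" using x0 y0 by (simp add: ws_def)
    have rho1: "\<bar>ws\<bar> * \<bar>y0\<bar> ^ \<beta> * \<bar>x0\<bar> ^ \<alpha> = 1" using x0 y0 by (simp add: ws_def)
    have hm: "Ham \<alpha> \<beta> (x0, y0, z0) (0, 0, ws) = 1/2"
    proof -
      have "x0 ^ (2*\<alpha>) * y0 ^ (2*\<beta>) * ws\<^sup>2 = (\<bar>ws\<bar> * \<bar>y0\<bar> ^ \<beta> * \<bar>x0\<bar> ^ \<alpha>)\<^sup>2"
        by (simp add: power_mult_distrib power_even_abs power_mult[symmetric] mult_ac)
      then show ?thesis by (simp add: Ham_def rho1)
    qed
    have "tau1 \<alpha> \<beta> (x0, y0, z0) (0, 0, ws) \<le> tau2 \<alpha> \<beta> (x0, y0, z0) (0, 0, ws)" using H hm by blast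
    then show "K \<le> B.P" using summary[OF a b x0 y0 hm] ws0 by (simp add: rho1 K_def)
  next
    assume KP: "K \<le> B.P"
    show "\<forall>u0 v0 w0. Ham \<alpha> \<beta> (x0, y0, z0) (u0, v0, w0) = 1/2 \<and> u0 = 0 \<longrightarrow>
             tau1 \<alpha> \<beta> (x0, y0, z0) (u0, v0, w0) \<le> tau2 \<alpha> \<beta> (x0, y0, z0) (u0, v0, w0)"
    proof (intro allI impI)
      fix u0 v0 w0 assume h: "Ham \<alpha> \<beta> (x0, y0, z0) (u0, v0, w0) = 1/2 \<and> u0 = 0"
      then have u: "u0 = 0" and hh: "Ham \<alpha> \<beta> (x0, y0, z0) (u0, v0, w0) = 1/2" by auto
      from hh have hm: "Ham \<alpha> \<beta> (x0, y0, z0) (0, v0, w0) = 1/2" unfolding u .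
      note s = summary[OF a b x0 y0 hm]
      define \<rho> where "\<rho> = \<bar>w0\<bar> * \<bar>y0\<bar> ^ \<beta> * \<bar>x0\<bar> ^ \<alpha>"
      have "\<rho> powr (1 / real \<beta>) \<le> 1" using s by (intro powr_le1) (auto simp: \<rho>_def)
      then have "\<rho> powr (1 / real \<beta>) * K \<le> K" using Kpos by (simp add: mult_left_le_one_le)
      then have "\<rho> powr (1 / real \<beta>) * K \<le> B.P" using KP by simp
      then show "tau1 \<alpha> \<beta> (x0, y0, z0) (u0, v0, w0) \<le> tau2 \<alpha> \<beta> (x0, y0, z0) (u0, v0, w0)"
        using s h by (simp add: \<rho>_def K_def)
    qed
  qed
  have part2: "\<exists>\<delta>. 0 < \<delta> \<and> \<delta> \<le> pi_gen (real \<beta>) / 2 \<and>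
               (\<forall>\<phi>2. 0 \<le> \<phi>2 \<and> \<phi>2 < 2 * pi_gen (real \<beta>) \<longrightarrow>
                  (let l = sph \<alpha> \<beta> (x0, y0, z0) (pi_gen (real \<alpha>) / 2) \<phi>2;
                       P = pi_gen (real \<beta>) in
                   ((\<phi>2 \<le> \<delta> \<or> \<bar>\<phi>2 - P\<bar> \<le> \<delta> \<or> 2 * P - \<phi>2 \<le> \<delta>) \<longrightarrow>
                      tau1 \<alpha> \<beta> (x0, y0, z0) l \<le> tau2 \<alpha> \<beta> (x0, y0, z0) l) \<and>
                   ((\<delta> \<le> \<phi>2 \<and> \<phi>2 \<le> P - \<delta> \<or> P + \<delta> \<le> \<phi>2 \<and> \<phi>2 \<le> 2 * P - \<delta>) \<longrightarrow>
                      tau2 \<alpha> \<beta> (x0, y0, z0) l \<le> tau1 \<alpha> \<beta> (x0, y0, z0) l)))"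
    if ne: "{(u0, v0, w0). Ham \<alpha> \<beta> (x0, y0, z0) (u0, v0, w0) = 1/2 \<and> u0 = 0 \<and>
             tau2 \<alpha> \<beta> (x0, y0, z0) (u0, v0, w0) \<le> tau1 \<alpha> \<beta> (x0, y0, z0) (u0, v0, w0)} \<noteq> {}"
  proof -
    obtain u0 v0 w0 where h: "Ham \<alpha> \<beta> (x0, y0, z0) (u0, v0, w0) = 1/2" "u0 = 0"
      "tau2 \<alpha> \<beta> (x0, y0, z0) (u0, v0, w0) \<le> tau1 \<alpha> \<beta> (x0, y0, z0) (u0, v0, w0)"
      using ne by auto
    then have hm: "Ham \<alpha> \<beta> (x0, y0, z0) (0, v0, w0) = 1/2" by simp
    note s = summary[OF a b x0 y0 hm]
    define \<rho> where "\<rho> = \<bar>w0\<bar> * \<bar>y0\<bar> ^ \<beta> * \<bar>x0\<bar> ^ \<alpha>"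
    have "\<rho> powr (1 / real \<beta>) \<le> 1" using s by (intro powr_le1) (auto simp: \<rho>_def)
    then have "\<rho> powr (1 / real \<beta>) * K \<le> K" using Kpos by (simp add: mult_left_le_one_le)
    moreover have "B.P \<le> \<rho> powr (1 / real \<beta>) * K" using s h by (simp add: \<rho>_def K_def)
    ultimately have PK: "B.P \<le> K" by simp
    define y where "y = B.P / K"
    have y: "0 < y" "y \<le> 1" using PK Kpos B.P_pos by (auto simp: y_def)
    obtain \<delta> where d: "0 \<le> \<delta>" "\<delta> \<le> B.P / 2" "B.S \<delta> = y" using B.S_surj_base[of y] y by auto
    have d0: "0 < \<delta>" using d y B.S0 by (cases "\<delta> = 0") auto
    have yK: "y * K = B.P" using Kpos by (simp add: y_def)
    show ?thesis
    proof (intro exI[of _ \<delta>] conjI allI impI)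
      show "0 < \<delta>" "\<delta> \<le> pi_gen (real \<beta>) / 2" using d0 d by auto
      fix \<phi>2 assume phi: "0 \<le> \<phi>2 \<and> \<phi>2 < 2 * pi_gen (real \<beta>)"
      obtain v w where sp: "sph \<alpha> \<beta> (x0, y0, z0) (pi_gen (real \<alpha>) / 2) \<phi>2 = (0, v, w)"
        "Ham \<alpha> \<beta> (x0, y0, z0) (0, v, w) = 1/2"
        "(\<bar>w\<bar> * \<bar>y0\<bar> ^ \<beta> * \<bar>x0\<bar> ^ \<alpha>) powr (1 / real \<beta>) = \<bar>B.S \<phi>2\<bar>"
        "w = 0 \<longleftrightarrow> B.S \<phi>2 = 0"
        by (rule sph_props[OF a b x0 y0])
      note s2 = summary[OF a b x0 y0 sp(2)]
      have c1: "tau1 \<alpha> \<beta> (x0, y0, z0) (0, v, w) \<le> tau2 \<alpha> \<beta> (x0, y0, z0) (0, v, w)"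
        if "\<phi>2 \<le> \<delta> \<or> \<bar>\<phi>2 - B.P\<bar> \<le> \<delta> \<or> 2 * B.P - \<phi>2 \<le> \<delta>"
      proof -
        have "\<bar>B.S \<phi>2\<bar> \<le> B.S \<delta>" by (rule B.arcA) (use d phi that in auto)
        then have "\<bar>B.S \<phi>2\<bar> * K \<le> y * K" using Kpos d by (simp add: mult_right_mono)
        then show ?thesis using s2 sp(3) yK by (simp add: K_def)
      qed
      have c2: "tau2 \<alpha> \<beta> (x0, y0, z0) (0, v, w) \<le> tau1 \<alpha> \<beta> (x0, y0, z0) (0, v, w)"
        if "\<delta> \<le> \<phi>2 \<and> \<phi>2 \<le> B.P - \<delta> \<or> B.P + \<delta> \<le> \<phi>2 \<and> \<phi>2 \<le> 2 * B.P - \<delta>"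
      proof -
        have "B.S \<delta> \<le> \<bar>B.S \<phi>2\<bar>" by (rule B.arcB) (use d that in auto)
        then have le: "y * K \<le> \<bar>B.S \<phi>2\<bar> * K" using Kpos d by (simp add: mult_right_mono)
        have "B.S \<phi>2 \<noteq> 0" using \<open>B.S \<delta> \<le> \<bar>B.S \<phi>2\<bar>\<close> d y by auto
        then have "w \<noteq> 0" using sp(4) by simp
        then show ?thesis using s2 sp(3) yK le by (simp add: K_def)
      qed
      show "let l = sph \<alpha> \<beta> (x0, y0, z0) (pi_gen (real \<alpha>) / 2) \<phi>2; P = pi_gen (real \<beta>) in
                   ((\<phi>2 \<le> \<delta> \<or> \<bar>\<phi>2 - P\<bar> \<le> \<delta> \<or> 2 * P - \<phi>2 \<le> \<delta>) \<longrightarrow>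
                      tau1 \<alpha> \<beta> (x0, y0, z0) l \<le> tau2 \<alpha> \<beta> (x0, y0, z0) l) \<and>
                   ((\<delta> \<le> \<phi>2 \<and> \<phi>2 \<le> P - \<delta> \<or> P + \<delta> \<le> \<phi>2 \<and> \<phi>2 \<le> 2 * P - \<delta>) \<longrightarrow>
                      tau2 \<alpha> \<beta> (x0, y0, z0) l \<le> tau1 \<alpha> \<beta> (x0, y0, z0) l)"
        unfolding Let_def sp(1) using c1 c2 by blast
    qed
  qed
  show ?thesis using part1 part2 cond by blast
qed

end
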